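(* Let $n\in\mathbb{N}$, $c\ge 0$, $\rho>0$, and consider the hypersurface $\bar N_\rho=\{\rho\}\times K$ of $(\bar N,g_{\bar N}^c)$ with induced metric $g_\rho^c$ and unit normal field $\nu=\frac{1}{\sqrt{f}}\frac{\partial}{\partial\rho}$, $f(\rho)=\frac{1}{4\rho^2}\frac{\rho+2c}{\rho+c}$. The eigenvalues of the shape operator $S_\rho^c$ of $\bar N_\rho$ with respect to $\nu$ are $$\sigma_1=\frac{c}{\rho+c}\sqrt{\frac{\rho+c}{\rho+2c}},\quad \sigma_2=\frac{2\rho^2+5c\rho+4c^2}{(\rho+2c)(\rho+c)}\sqrt{\frac{\rho+c}{\rho+2c}},\quad \sigma_3=\frac{\rho+4c}{\rho+2c}\sqrt{\frac{\rho+c}{\rho+2c}},\quad \sigma_4=\sqrt{\frac{\rho+c}{\rho+2c}},$$ where $\sigma_1$ and $\sigma_4$ have multiplicity $2n-2$, $\sigma_2$ has multiplicity $1$ and $\sigma_3$ has multiplicity $2$. In particular, if $c>0$ then $(\bar N_\rho,g_\rho^c)$ is strictly convex. Furthermore, the mean curvature of $(\bar N_\rho,g_\rho^c)$ is $$\mathrm{tr}(S_\rho^c)=\frac{(2n+2)\rho^2+(8n+7)c\rho+(8n+4)c^2}{(\rho+c)(\rho+2c)}\sqrt{\frac{\rho+c}{\rho+2c}}.$$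
   Context: Let $n\in\mathbb{N}$, $c\ge0$, and $B_1(0)\subset\mathbb{C}^{n-1}$ the open unit ball. Let $K=B_1(0)\times\mathbb{R}\times\mathbb{C}^n$ and $\bar N=(0,\infty)\times K$ with global coordinates $(\rho,X^a,\tilde\phi,w^0,w^a)$, $a=1,\dots,n-1$ (for $n=1$ the families $X^a,w^a$ are empty and empty sums are zero), $\|X\|^2=\sum_a|X^a|^2<1$. The metric is $g_{\bar N}^c=\frac{1}{4\rho^2}\frac{\rho+2c}{\rho+c}d\rho^2+g_\rho^c$ with $$g_\rho^c=\frac{\rho+c}{\rho}\frac{1}{1-\|X\|^2}\Big(\sum_a|dX^a|^2+\frac{1}{1-\|X\|^2}\Big|\sum_a\bar X^adX^a\Big|^2\Big)+\frac{1}{4\rho^2}\frac{\rho+c}{\rho+2c}\Big(d\tilde\phi-4\,\mathrm{Im}\Big(\bar w^0dw^0-\sum_a\bar w^adw^a\Big)+\frac{2c}{1-\|X\|^2}\mathrm{Im}\Big(\sum_a\bar X^adX^a\Big)\Big)^2$$ $$-\frac{2}{\rho}\Big(dw^0d\bar w^0-\sum_adw^ad\bar w^a\Big)+\frac{\rho+c}{\rho^2}\frac{4}{1-\|X\|^2}\Big|dw^0+\sum_aX^adw^a\Big|^2.$$ This is the one-loop deformed c-map metric on $\mathrm{SU}(n,2)/\mathrm{S}(\mathrm{U}(n)\times\mathrm{U}(2))$ (the symmetric metric for $c=0$); it is quaternionic Kähler with $\mathrm{Ric}=-2(n+2)g_{\bar N}^c$, and the level sets $\bar N_\rho=\{\rho\}\times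 K$ are orbits of an isometric group action. The shape operator is defined by $\mathrm{II}(X,Y)=(\nabla_XY)^\perp=g_\rho^c(S_\rho^cX,Y)\,\nu$. *)

theory Defs
  imports Complex_Main "Jordan_Normal_Form.Char_Poly"
begin

text \<open>Real coordinates on the open set N-bar (dimension 4n), encoded as functions nat to real:
  index 0: rho;
  indices 2a-1, 2a (a = 1..n-1): real and imaginary part of X^a;
  index 2n-1: phi-tilde;
  indices 2n+2k, 2n+2k+1 (k = 0..n-1): real and imaginary part of w^k (w^0 for k = 0).
  A tangent vector v is encoded in the same way by its components with respect to the
  coordinate fields, so that dX^a(v), dw^k(v) etc. are read off in the same manner.\<close>

definition cX :: "nat \<Rightarrow> (nat \<Rightarrow> real) \<Rightarrow> nat \<Rightarrow> complex" where
  "cX n p a = Complex (p (2*a - 1)) (p (2*a))"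

definition cphi :: "nat \<Rightarrow> (nat \<Rightarrow> real) \<Rightarrow> real" where
  "cphi n p = p (2*n - 1)"

definition cW :: "nat \<Rightarrow> (nat \<Rightarrow> real) \<Rightarrow> nat \<Rightarrow> complex" where
  "cW n p k = Complex (p (2*n + 2*k)) (p (2*n + 2*k + 1))"

definition normX2 :: "nat \<Rightarrow> (nat \<Rightarrow> real) \<Rightarrow> real" where
  "normX2 n p = (\<Sum>a\<in>{1..<n}. (cmod (cX n p a))\<^sup>2)"

definition fcoef :: "real \<Rightarrow> real \<Rightarrow> real" where
  "fcoef c \<rho> = 1 / (4 * \<rho>\<^sup>2) * ((\<rho> + 2*c) / (\<rho> + c))"

text \<open>Quadratic form of g_rho^c at the point p evaluated on the tangent vector v
  (the d rho component v 0 is ignored).\<close>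
definition grho_quad :: "nat \<Rightarrow> real \<Rightarrow> (nat \<Rightarrow> real) \<Rightarrow> (nat \<Rightarrow> real) \<Rightarrow> real" where
  "grho_quad n c p v =
    (let \<rho> = p 0; N = normX2 n p;
         SXdX = (\<Sum>a\<in>{1..<n}. cnj (cX n p a) * cX n v a);
         \<theta> = cphi n v
             - 4 * Im (cnj (cW n p 0) * cW n v 0 - (\<Sum>a\<in>{1..<n}. cnj (cW n p a) * cW n v a))
             + 2 * c / (1 - N) * Im SXdX
     in (\<rho> + c) / \<rho> * (1 / (1 - N)) *
          ((\<Sum>a\<in>{1..<n}. (cmod (cX n v a))\<^sup>2) + 1 / (1 - N) * (cmod SXdX)\<^sup>2)
        + 1 / (4 * \<rho>\<^sup>2) * ((\<rho> + c) / (\<rho> + 2*c)) * \<theta>\<^sup>2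
        - 2 / \<rho> * ((cmod (cW n v 0))\<^sup>2 - (\<Sum>a\<in>{1..<n}. (cmod (cW n v a))\<^sup>2))
        + (\<rho> + c) / \<rho>\<^sup>2 * (4 / (1 - N)) *
            (cmod (cW n v 0 + (\<Sum>a\<in>{1..<n}. cX n p a * cW n v a)))\<^sup>2)"

definition gN_quad :: "nat \<Rightarrow> real \<Rightarrow> (nat \<Rightarrow> real) \<Rightarrow> (nat \<Rightarrow> real) \<Rightarrow> real" where
  "gN_quad n c p v = fcoef c (p 0) * (v 0)\<^sup>2 + grho_quad n c p v"

definition ebasis :: "nat \<Rightarrow> nat \<Rightarrow> real" where
  "ebasis i = (\<lambda>k. if k = i then 1 else 0)"

definition gN :: "nat \<Rightarrow> real \<Rightarrow> (nat \<Rightarrow> real) \<Rightarrow> nat \<Rightarrow> nat \<Rightarrow> real" where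
  "gN n c p i j = (gN_quad n c p (\<lambda>k. ebasis i k + ebasis j k)
                   - gN_quad n c p (ebasis i) - gN_quad n c p (ebasis j)) / 2"

definition pderiv_coord :: "((nat \<Rightarrow> real) \<Rightarrow> real) \<Rightarrow> nat \<Rightarrow> (nat \<Rightarrow> real) \<Rightarrow> real" where
  "pderiv_coord F k p = (THE D. ((\<lambda>t. F (p(k := t))) has_field_derivative D) (at (p k)))"

text \<open>Christoffel symbols of the first kind of the Levi-Civita connection:
  g(nabla_{d_i} d_j, d_k) = (d_i g_jk + d_j g_ik - d_k g_ij)/2 (Koszul formula).\<close>
definition christ1 :: "nat \<Rightarrow> real \<Rightarrow> (nat \<Rightarrow> real) \<Rightarrow> nat \<Rightarrow> nat \<Rightarrow> nat \<Rightarrow> real" where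
  "christ1 n c p i j k =
     (pderiv_coord (\<lambda>q. gN n c q j k) i p + pderiv_coord (\<lambda>q. gN n c q i k) j p
      - pderiv_coord (\<lambda>q. gN n c q i j) k p) / 2"

definition nu :: "real \<Rightarrow> (nat \<Rightarrow> real) \<Rightarrow> nat \<Rightarrow> real" where
  "nu c p k = (if k = 0 then 1 / sqrt (fcoef c (p 0)) else 0)"

text \<open>g(nabla_{d_i} d_j, nu), i.e. the scalar second fundamental form of N_rho w.r.t. nu
  on the coordinate fields d_i, d_j (i, j \<ge> 1 tangent to N_rho).\<close>
definition sff :: "nat \<Rightarrow> real \<Rightarrow> (nat \<Rightarrow> real) \<Rightarrow> nat \<Rightarrow> nat \<Rightarrow> real" where
  "sff n c p i j = (\<Sum>k<4*n. nu c p k * christ1 n c p i j k)"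

text \<open>The matrix S (w.r.t. the coordinate frame d_1, ..., d_{4n-1} of T N_rho, matrix index r
  corresponding to d_{r+1}) represents the shape operator S_rho^c iff
  g_rho(S d_i, d_j) nu = II(d_i, d_j) for all tangent coordinate fields.\<close>
definition is_shape_operator :: "nat \<Rightarrow> real \<Rightarrow> (nat \<Rightarrow> real) \<Rightarrow> real mat \<Rightarrow> bool" where
  "is_shape_operator n c p S \<longleftrightarrow> S \<in> carrier_mat (4*n - 1) (4*n - 1) \<and>
     (\<forall>i < 4*n - 1. \<forall>j < 4*n - 1.
        (\<Sum>r < 4*n - 1. S $$ (r, i) * gN n c p (r + 1) (j + 1)) = sff n c p (i + 1) (j + 1))"

definition mat_trace :: "real mat \<Rightarrow> real" where
  "mat_trace S = (\<Sum>i<dim_row S. S $$ (i, i))"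

definition in_Nbar :: "nat \<Rightarrow> (nat \<Rightarrow> real) \<Rightarrow> bool" where
  "in_Nbar n p \<longleftrightarrow> p 0 > 0 \<and> normX2 n p < 1"

end

theory Submission
  imports Defs
begin

definition SX :: "nat \<Rightarrow> (nat\<Rightarrow>real) \<Rightarrow> (nat\<Rightarrow>real) \<Rightarrow> complex" where
  "SX n q v = (\<Sum>a\<in>{1..<n}. cnj (cX n q a) * cX n v a)"
definition theta :: "nat \<Rightarrow> real \<Rightarrow> (nat\<Rightarrow>real) \<Rightarrow> (nat\<Rightarrow>real) \<Rightarrow> real" where
  "theta n c q v = cphi n v
     - 4 * Im (cnj (cW n q 0) * cW n v 0 - (\<Sum>a\<in>{1..<n}. cnj (cW n q a) * cW n v a))
     + 2 * c / (1 - normX2 n q) * Im (SX n q v)"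
definition ell :: "nat \<Rightarrow> (nat\<Rightarrow>real) \<Rightarrow> (nat\<Rightarrow>real) \<Rightarrow> complex" where
  "ell n q v = cW n v 0 + (\<Sum>a\<in>{1..<n}. cX n q a * cW n v a)"
definition bA :: "nat \<Rightarrow> (nat\<Rightarrow>real) \<Rightarrow> (nat\<Rightarrow>real) \<Rightarrow> (nat\<Rightarrow>real) \<Rightarrow> real" where
  "bA n q v w = 1 / (1 - normX2 n q) * ((\<Sum>a\<in>{1..<n}. Re (cX n v a * cnj (cX n w a)))
      + 1 / (1 - normX2 n q) * Re (SX n q v * cnj (SX n q w)))"
definition bT :: "nat \<Rightarrow> real \<Rightarrow> (nat\<Rightarrow>real) \<Rightarrow> (nat\<Rightarrow>real) \<Rightarrow> (nat\<Rightarrow>real) \<Rightarrow> real" where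
  "bT n c q v w = theta n c q v * theta n c q w"
definition bB :: "nat \<Rightarrow> (nat\<Rightarrow>real) \<Rightarrow> (nat\<Rightarrow>real) \<Rightarrow> real" where
  "bB n v w = Re (cW n v 0 * cnj (cW n w 0)) - (\<Sum>a\<in>{1..<n}. Re (cW n v a * cnj (cW n w a)))"
definition bC :: "nat \<Rightarrow> (nat\<Rightarrow>real) \<Rightarrow> (nat\<Rightarrow>real) \<Rightarrow> (nat\<Rightarrow>real) \<Rightarrow> real" where
  "bC n q v w = 4 / (1 - normX2 n q) * Re (ell n q v * cnj (ell n q w))"
definition alp :: "real \<Rightarrow> real \<Rightarrow> real" where "alp c t = (t + c) / t"
definition bet :: "real \<Rightarrow> real \<Rightarrow> real" where "bet c t = 1 / (4 * t\<^sup>2) * ((t + c) / (t + 2*c))"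
definition gam :: "real \<Rightarrow> real" where "gam t = - (2 / t)"
definition del :: "real \<Rightarrow> real \<Rightarrow> real" where "del c t = (t + c) / t\<^sup>2 "
definition bG :: "nat \<Rightarrow> real \<Rightarrow> (nat\<Rightarrow>real) \<Rightarrow> (nat\<Rightarrow>real) \<Rightarrow> (nat\<Rightarrow>real) \<Rightarrow> real" where
  "bG n c q v w = alp c (q 0) * bA n q v w + bet c (q 0) * bT n c q v w + gam (q 0) * bB n v w
     + del c (q 0) * bC n q v w"

lemma cm2: "(cmod z)\<^sup>2 = Re (z * cnj z)"
  unfolding cmod_power2 by (simp add: power2_eq_square)

lemma grho_bG: "grho_quad n c q v = bG n c q v v"
  unfolding grho_quad_def Let_def bG_def bA_def bT_def bB_def bC_def alp_def bet_def gam_def del_def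
    theta_def ell_def SX_def cm2
  by (simp add: power2_eq_square sum_subtractf algebra_simps)

lemma cX_add: "cX n (\<lambda>k. x k + y k) a = cX n x a + cX n y a"
  by (simp add: cX_def complex_eq_iff)
lemma cX_scale: "cX n (\<lambda>k. t * x k) a = complex_of_real t * cX n x a"
  by (simp add: cX_def complex_eq_iff)
lemma cW_add: "cW n (\<lambda>k. x k + y k) a = cW n x a + cW n y a"
  by (simp add: cW_def complex_eq_iff)
lemma cW_scale: "cW n (\<lambda>k. t * x k) a = complex_of_real t * cW n x a"
  by (simp add: cW_def complex_eq_iff)
lemma cphi_add: "cphi n (\<lambda>k. x k + y k) = cphi n x + cphi n y"
  by (simp add: cphi_def)
lemma cphi_scale: "cphi n (\<lambda>k. t * x k) = t * cphi n x"
  by (simp add: cphi_def)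
lemma SX_add: "SX n q (\<lambda>k. x k + y k) = SX n q x + SX n q y"
  by (simp add: SX_def cX_add sum.distrib distrib_left)
lemma SX_scale: "SX n q (\<lambda>k. t * x k) = complex_of_real t * SX n q x"
  by (simp add: SX_def cX_scale sum_distrib_left mult.left_commute)
lemma ell_add: "ell n q (\<lambda>k. x k + y k) = ell n q x + ell n q y"
  by (simp add: ell_def cW_add sum.distrib distrib_left)
lemma ell_scale: "ell n q (\<lambda>k. t * x k) = complex_of_real t * ell n q x"
  by (simp add: ell_def cW_scale sum_distrib_left mult.left_commute distrib_left)
lemma theta_add: "theta n c q (\<lambda>k. x k + y k) = theta n c q x + theta n c q y"
  by (simp add: theta_def cW_add cphi_add SX_add sum.distrib distrib_left)
lemma theta_scale: "theta n c q (\<lambda>k. t * x k) = t * theta n c q x"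
  by (simp add: theta_def cW_scale cphi_scale SX_scale sum_distrib_left mult.left_commute
     right_diff_distrib distrib_left flip: sum_subtractf)

lemma bA_add: "bA n q (\<lambda>k. x k + y k) w = bA n q x w + bA n q y w"
  by (simp add: bA_def cX_add SX_add sum.distrib algebra_simps)
lemma bA_scale: "bA n q (\<lambda>k. t * x k) w = t * bA n q x w"
  by (simp add: bA_def cX_scale SX_scale sum_distrib_left algebra_simps)
lemma bT_add: "bT n c q (\<lambda>k. x k + y k) w = bT n c q x w + bT n c q y w"
  by (simp add: bT_def theta_add algebra_simps)
lemma bT_scale: "bT n c q (\<lambda>k. t * x k) w = t * bT n c q x w"
  by (simp add: bT_def theta_scale algebra_simps)
lemma bB_add: "bB n (\<lambda>k. x k + y k) w = bB n x w + bB n y w"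
  by (simp add: bB_def cW_add sum.distrib algebra_simps)
lemma bB_scale: "bB n (\<lambda>k. t * x k) w = t * bB n x w"
  by (simp add: bB_def cW_scale sum_distrib_left algebra_simps)
lemma bC_add: "bC n q (\<lambda>k. x k + y k) w = bC n q x w + bC n q y w"
  by (simp add: bC_def ell_add algebra_simps)
lemma bC_scale: "bC n q (\<lambda>k. t * x k) w = t * bC n q x w"
  by (simp add: bC_def ell_scale algebra_simps)

lemma bA_sym: "bA n q v w = bA n q w v"
  by (simp add: bA_def algebra_simps)
lemma bT_sym: "bT n c q v w = bT n c q w v"
  by (simp add: bT_def algebra_simps)
lemma bB_sym: "bB n v w = bB n w v"
  by (simp add: bB_def algebra_simps)
lemma bC_sym: "bC n q v w = bC n q w v"
  by (simp add: bC_def algebra_simps)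

lemma bG_add: "bG n c q (\<lambda>k. x k + y k) w = bG n c q x w + bG n c q y w"
  by (simp add: bG_def bA_add bT_add bB_add bC_add algebra_simps)
lemma bG_scale: "bG n c q (\<lambda>k. t * x k) w = t * bG n c q x w"
  by (simp add: bG_def bA_scale bT_scale bB_scale bC_scale algebra_simps)
lemma bG_sym: "bG n c q v w = bG n c q w v"
  by (simp add: bG_def bA_sym bT_sym bB_sym bC_sym)
lemma bG_add2: "bG n c q w (\<lambda>k. x k + y k) = bG n c q w x + bG n c q w y"
  by (metis bG_sym bG_add)

definition linR :: "((nat \<Rightarrow> real) \<Rightarrow> real) \<Rightarrow> bool" where
  "linR L \<longleftrightarrow> (\<forall>x y. L (\<lambda>k. x k + y k) = L x + L y) \<and> (\<forall>t x. L (\<lambda>k. t * x k) = t * L x)"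

lemma linR_zero: assumes "linR L" shows "L (\<lambda>k. 0) = 0"
proof -
  have h: "\<forall>t x. L (\<lambda>k. t * x k) = t * L x" using assms unfolding linR_def by blast
  from h[rule_format, of 0 "\<lambda>k. 0"] show ?thesis by simp
qed

lemma linR_sum: assumes "linR L" "finite I" shows "L (\<lambda>k. \<Sum>i\<in>I. g i k) = (\<Sum>i\<in>I. L (g i))"
  using assms(2)
proof induct
  case empty then show ?case using linR_zero[OF assms(1)] by simp
next
  case (insert i I)
  have "L (\<lambda>k. \<Sum>j\<in>insert i I. g j k) = L (\<lambda>k. g i k + (\<Sum>j\<in>I. g j k))"
    using insert by simp
  also have "\<dots> = L (g i) + L (\<lambda>k. \<Sum>j\<in>I. g j k)"
    using assms(1) unfolding linR_def by (metis (no_types))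
  finally show ?case using insert by simp
qed

lemma linR_sum_scaled: assumes "linR L" "finite I"
  shows "L (\<lambda>k. \<Sum>i\<in>I. y i * g i k) = (\<Sum>i\<in>I. y i * L (g i))"
proof -
  have "L (\<lambda>k. \<Sum>i\<in>I. y i * g i k) = (\<Sum>i\<in>I. L (\<lambda>k. y i * g i k))"
    using linR_sum[OF assms, of "\<lambda>i k. y i * g i k"] by simp
  also have "\<dots> = (\<Sum>i\<in>I. y i * L (g i))"
    using assms(1) unfolding linR_def by (metis (no_types))
  finally show ?thesis .
qed

lemma linR_bG1: "linR (\<lambda>v. bG n c q v w)"
  unfolding linR_def by (simp add: bG_add bG_scale)
lemma linR_bG2: "linR (\<lambda>v. bG n c q w v)"
  using linR_bG1[of n c q w] unfolding linR_def by (metis bG_sym)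

lemma gN_quad_bG: "gN_quad n c q v = fcoef c (q 0) * (v 0)\<^sup>2 + bG n c q v v"
  by (simp add: gN_quad_def grho_bG)

lemma gN_bG: "gN n c q i j = fcoef c (q 0) * ebasis i 0 * ebasis j 0 + bG n c q (ebasis i) (ebasis j)"
  unfolding gN_def gN_quad_bG bG_add bG_add2
  by (simp add: bG_sym[of n c q "ebasis j" "ebasis i"] power2_eq_square algebra_simps)

lemma upd0_cX: "a \<ge> 1 \<Longrightarrow> cX n (q(0:=t)) a = cX n q a"
  by (simp add: cX_def)
lemma upd0_cW: "n \<ge> 1 \<Longrightarrow> cW n (q(0:=t)) a = cW n q a"
  by (simp add: cW_def)
lemma upd0_normX2: "normX2 n (q(0:=t)) = normX2 n q"
  unfolding normX2_def by (rule sum.cong) (auto simp: upd0_cX)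
lemma upd0_SX: "SX n (q(0:=t)) v = SX n q v"
  unfolding SX_def by (rule sum.cong) (auto simp: upd0_cX)
lemma upd0_ell: "ell n (q(0:=t)) v = ell n q v"
  unfolding ell_def by (intro arg_cong2[where f="(+)"] refl sum.cong) (auto simp: upd0_cX)
lemma upd0_theta: "n \<ge> 1 \<Longrightarrow> theta n c (q(0:=t)) v = theta n c q v"
  unfolding theta_def upd0_normX2 upd0_SX by (simp add: upd0_cW)
lemma upd0_bA: "bA n (q(0:=t)) v w = bA n q v w"
  unfolding bA_def upd0_normX2 upd0_SX ..
lemma upd0_bT: "n \<ge> 1 \<Longrightarrow> bT n c (q(0:=t)) v w = bT n c q v w"
  unfolding bT_def by (simp add: upd0_theta)
lemma upd0_bC: "bC n (q(0:=t)) v w = bC n q v w"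
  unfolding bC_def upd0_normX2 upd0_ell ..

lemma e0_cX: "a \<ge> 1 \<Longrightarrow> cX n (ebasis 0) a = 0"
  by (simp add: cX_def ebasis_def complex_eq_iff)
lemma e0_cW: "n \<ge> 1 \<Longrightarrow> cW n (ebasis 0) a = 0"
  by (simp add: cW_def ebasis_def complex_eq_iff)
lemma e0_cphi: "n \<ge> 1 \<Longrightarrow> cphi n (ebasis 0) = 0"
  by (simp add: cphi_def ebasis_def)
lemma e0_SX: "SX n q (ebasis 0) = 0"
  unfolding SX_def by (rule sum.neutral) (auto simp: e0_cX)
lemma e0_ell: "n \<ge> 1 \<Longrightarrow> ell n q (ebasis 0) = 0"
  unfolding ell_def by (simp add: e0_cW)
lemma e0_theta: "n \<ge> 1 \<Longrightarrow> theta n c q (ebasis 0) = 0"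
  unfolding theta_def by (simp add: e0_cW e0_cphi e0_SX)
lemma e0_bG: "n \<ge> 1 \<Longrightarrow> bG n c q (ebasis 0) w = 0"
proof -
  assume n: "n \<ge> 1"
  have "(\<Sum>a\<in>{1..<n}. Re (cX n (ebasis 0) a * cnj (cX n w a))) = 0"
    by (rule sum.neutral) (auto simp: e0_cX)
  then have "bA n q (ebasis 0) w = 0" unfolding bA_def by (simp add: e0_SX)
  moreover have "bB n (ebasis 0) w = 0" unfolding bB_def using n by (simp add: e0_cW)
  moreover have "bC n q (ebasis 0) w = 0" unfolding bC_def using n by (simp add: e0_ell)
  moreover have "bT n c q (ebasis 0) w = 0" unfolding bT_def using n by (simp add: e0_theta)
  ultimately show ?thesis unfolding bG_def by simp
qed

lemma gN_j0: "n \<ge> 1 \<Longrightarrow> j \<ge> 1 \<Longrightarrow> gN n c q j 0 = 0"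
  by (simp add: gN_bG e0_bG bG_sym[of n c q _ "ebasis 0"]) (simp add: ebasis_def)

lemma pderiv_zero: "pderiv_coord (\<lambda>q. 0) k p = 0"
  unfolding pderiv_coord_def
  by (rule the_equality) (auto intro: DERIV_unique DERIV_const)

lemma pderiv_unique: "((\<lambda>t. F (p(k := t))) has_field_derivative D) (at (p k)) \<Longrightarrow> pderiv_coord F k p = D"
  unfolding pderiv_coord_def
  by (rule the_equality) (auto intro: DERIV_unique)

lemma deriv_coef:
  fixes \<rho> c A T B C :: real
  assumes "\<rho> > 0" "c \<ge> 0"
  shows "((\<lambda>t. alp c t * A + bet c t * T + gam t * B + del c t * C) has_field_derivative
     ((- c / \<rho>\<^sup>2) * A + (- (2*\<rho>\<^sup>2 + 5*c*\<rho> + 4*c\<^sup>2) / (4*\<rho>^3*(\<rho>+2*c)\<^sup>2)) * T + (2/\<rho>\<^sup>2) * B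
      + (- (\<rho>+2*c)/\<rho>^3) * C)) (at \<rho>)"
proof -
  have p2: "\<rho> + 2*c \<noteq> 0" "\<rho> \<noteq> 0" using assms by auto
  have d1: "((\<lambda>t. alp c t) has_field_derivative (- c / \<rho>\<^sup>2)) (at \<rho>)"
    unfolding alp_def using p2
    by (auto intro!: derivative_eq_intros simp: field_simps power2_eq_square)
  have beq: "(\<lambda>t. bet c t) = (\<lambda>t. (t + c) / (4*t^3 + 8*c*t^2))"
  proof
    fix t :: real
    have "4*t^3 + 8*c*t^2 = (4*t\<^sup>2) * (t + 2*c)" by (simp add: algebra_simps power2_eq_square power3_eq_cube)
    then show "bet c t = (t + c) / (4*t^3 + 8*c*t^2)" unfolding bet_def by simp
  qed
  have df: "((\<lambda>t. t + c) has_field_derivative 1) (at \<rho>)"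
    by (auto intro!: derivative_eq_intros)
  have dg: "((\<lambda>t. 4*t^3 + 8*c*t^2) has_field_derivative (12*\<rho>\<^sup>2 + 16*c*\<rho>)) (at \<rho>)"
    by (auto intro!: derivative_eq_intros simp: power2_eq_square power3_eq_cube algebra_simps)
  have gq: "4*\<rho>^3 + 8*c*\<rho>^2 = (4*\<rho>\<^sup>2) * (\<rho> + 2*c)" by (simp add: algebra_simps power2_eq_square power3_eq_cube)
  have gnz: "4*\<rho>^3 + 8*c*\<rho>^2 \<noteq> 0" unfolding gq using p2 by simp
  have d2': "((\<lambda>t. bet c t) has_field_derivative
      ((1 * (4*\<rho>^3 + 8*c*\<rho>^2) - (\<rho> + c) * (12*\<rho>\<^sup>2 + 16*c*\<rho>)) / ((4*\<rho>^3 + 8*c*\<rho>^2) * (4*\<rho>^3 + 8*c*\<rho>^2)))) (at \<rho>)"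
    unfolding beq by (rule DERIV_divide[OF df dg gnz])
  have "(1 * (4*\<rho>^3 + 8*c*\<rho>^2) - (\<rho> + c) * (12*\<rho>\<^sup>2 + 16*c*\<rho>)) / ((4*\<rho>^3 + 8*c*\<rho>^2) * (4*\<rho>^3 + 8*c*\<rho>^2))
     = (- (2*\<rho>\<^sup>2 + 5*c*\<rho> + 4*c\<^sup>2) / (4*\<rho>^3*(\<rho>+2*c)\<^sup>2))"
  proof -
    have num: "1 * (4*\<rho>^3 + 8*c*\<rho>^2) - (\<rho> + c) * (12*\<rho>\<^sup>2 + 16*c*\<rho>) = (4*\<rho>) * (- (2*\<rho>\<^sup>2 + 5*c*\<rho> + 4*c\<^sup>2))"
      by (simp add: algebra_simps power2_eq_square power3_eq_cube)
    have den: "(4*\<rho>^3 + 8*c*\<rho>^2) * (4*\<rho>^3 + 8*c*\<rho>^2) = (4*\<rho>) * (4*\<rho>^3*(\<rho>+2*c)\<^sup>2)"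
      by (simp add: algebra_simps power2_eq_square power3_eq_cube)
    show ?thesis unfolding num den using p2 by (simp only: mult_divide_mult_cancel_left)
  qed
  with d2' have d2: "((\<lambda>t. bet c t) has_field_derivative (- (2*\<rho>\<^sup>2 + 5*c*\<rho> + 4*c\<^sup>2) / (4*\<rho>^3*(\<rho>+2*c)\<^sup>2))) (at \<rho>)"
    by simp
  have d3: "((\<lambda>t. gam t) has_field_derivative (2/\<rho>\<^sup>2)) (at \<rho>)"
    unfolding gam_def using p2
    by (auto intro!: derivative_eq_intros simp: field_simps power2_eq_square)
  have d4: "((\<lambda>t. del c t) has_field_derivative (- (\<rho>+2*c)/\<rho>^3)) (at \<rho>)"
    unfolding del_def using p2
    by (auto intro!: derivative_eq_intros simp: field_simps power2_eq_square power3_eq_cube)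
  show ?thesis
    by (rule DERIV_add[OF DERIV_add[OF DERIV_add[OF DERIV_cmult_right[OF d1] DERIV_cmult_right[OF d2]]
          DERIV_cmult_right[OF d3]] DERIV_cmult_right[OF d4]])
qed

definition bF :: "nat \<Rightarrow> real \<Rightarrow> (nat\<Rightarrow>real) \<Rightarrow> (nat\<Rightarrow>real) \<Rightarrow> (nat\<Rightarrow>real) \<Rightarrow> real" where
  "bF n c p v w = sqrt ((p 0 + c) / (p 0 + 2*c)) *
     (c / p 0 * bA n p v w + (2*(p 0)\<^sup>2 + 5*c*p 0 + 4*c\<^sup>2) / (4*(p 0)\<^sup>2*(p 0+2*c)\<^sup>2) * bT n c p v w
      - 2 / p 0 * bB n v w + (p 0 + 2*c) / (p 0)\<^sup>2 * bC n p v w)"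

lemma gN_tan: "i \<ge> 1 \<Longrightarrow> j \<ge> 1 \<Longrightarrow> gN n c q i j = bG n c q (ebasis i) (ebasis j)"
  by (simp add: gN_bG ebasis_def)

lemma sqrt_fcoef:
  assumes "\<rho> > 0" "c \<ge> 0"
  shows "1 / sqrt (fcoef c \<rho>) = 2 * \<rho> * sqrt ((\<rho> + c) / (\<rho> + 2*c))"
proof -
  define s where "s = sqrt ((\<rho> + c) / (\<rho> + 2*c))"
  have q: "(\<rho> + c) / (\<rho> + 2*c) > 0" using assms by simp
  have sp: "s > 0" unfolding s_def using q by simp
  have s2: "s\<^sup>2 = (\<rho> + c) / (\<rho> + 2*c)" unfolding s_def using q by simp
  have is2: "1 / s\<^sup>2 = (\<rho> + 2*c) / (\<rho> + c)" using s2 by simp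
  have "(1 / (2*\<rho>*s))\<^sup>2 = 1 / (4*\<rho>\<^sup>2) * (1 / s\<^sup>2)"
    by (simp add: power_divide power_mult_distrib)
  then have "fcoef c \<rho> = (1 / (2*\<rho>*s))\<^sup>2"
    unfolding fcoef_def is2 by simp
  then have "sqrt (fcoef c \<rho>) = 1 / (2*\<rho>*s)" using assms sp by simp
  then show ?thesis unfolding s_def[symmetric] by simp
qed

lemma sff_bF:
  assumes n: "n \<ge> 1" and c: "c \<ge> 0" and r: "p 0 > 0" and i: "i \<ge> 1" and j: "j \<ge> 1"
  shows "sff n c p i j = bF n c p (ebasis i) (ebasis j)"
proof -
  define \<rho> where "\<rho> = p 0"
  define A where "A = bA n p (ebasis i) (ebasis j)"
  define T where "T = bT n c p (ebasis i) (ebasis j)"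
  define B where "B = bB n (ebasis i) (ebasis j)"
  define C where "C = bC n p (ebasis i) (ebasis j)"
  define D where "D = (- c / \<rho>\<^sup>2) * A + (- (2*\<rho>\<^sup>2 + 5*c*\<rho> + 4*c\<^sup>2) / (4*\<rho>^3*(\<rho>+2*c)\<^sup>2)) * T + (2/\<rho>\<^sup>2) * B
      + (- (\<rho>+2*c)/\<rho>^3) * C"
  have fe: "(\<lambda>t. gN n c (p(0:=t)) i j) = (\<lambda>t. alp c t * A + bet c t * T + gam t * B + del c t * C)"
    using n i j by (simp add: gN_tan bG_def upd0_bA upd0_bT upd0_bC A_def T_def B_def C_def)
  have "pderiv_coord (\<lambda>q. gN n c q i j) 0 p = D"
    by (rule pderiv_unique) (use deriv_coef[OF r c, of A T B C] in \<open>simp add: fe D_def \<rho>_def\<close>)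
  moreover have "(\<lambda>q. gN n c q j 0) = (\<lambda>q. 0)" "(\<lambda>q. gN n c q i 0) = (\<lambda>q. 0)"
    using n i j by (auto simp: gN_j0)
  ultimately have ch: "christ1 n c p i j 0 = - D / 2"
    unfolding christ1_def by (simp add: pderiv_zero)
  have "sff n c p i j = nu c p 0 * christ1 n c p i j 0"
  proof -
    have "sff n c p i j = (\<Sum>k<4*n. if k = 0 then nu c p 0 * christ1 n c p i j 0 else 0)"
      unfolding sff_def by (rule sum.cong) (auto simp: nu_def)
    also have "\<dots> = nu c p 0 * christ1 n c p i j 0" using n by simp
    finally show ?thesis .
  qed
  also have "\<dots> = 2 * \<rho> * sqrt ((\<rho> + c) / (\<rho> + 2*c)) * (- D / 2)"
    unfolding ch nu_def using sqrt_fcoef[OF r c] by (simp add: \<rho>_def)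
  also have "\<dots> = bF n c p (ebasis i) (ebasis j)"
  proof -
    have r0: "\<rho> \<noteq> 0" using r \<rho>_def by simp
    define X where "X = 2*\<rho>\<^sup>2 + 5*c*\<rho> + 4*c\<^sup>2"
    have e1: "\<rho> * (- c / \<rho>\<^sup>2) = - (c / \<rho>)" using r0 by (simp add: power2_eq_square)
    have e2: "\<rho> * (- X / (4*\<rho>^3*(\<rho>+2*c)\<^sup>2)) = - (X / (4*\<rho>\<^sup>2*(\<rho>+2*c)\<^sup>2))"
      using r0 by (simp add: power2_eq_square power3_eq_cube)
    have e3: "\<rho> * (2 / \<rho>\<^sup>2) = 2 / \<rho>" using r0 by (simp add: power2_eq_square)
    have e4: "\<rho> * (- (\<rho>+2*c) / \<rho>^3) = - ((\<rho>+2*c) / \<rho>\<^sup>2)" using r0 by (simp add: power2_eq_square power3_eq_cube) (simp add: field_simps)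
    have "\<rho> * D = (\<rho> * (- c / \<rho>\<^sup>2)) * A + (\<rho> * (- X / (4*\<rho>^3*(\<rho>+2*c)\<^sup>2))) * T
        + (\<rho> * (2 / \<rho>\<^sup>2)) * B + (\<rho> * (- (\<rho>+2*c) / \<rho>^3)) * C"
      unfolding D_def X_def by (simp only: distrib_left mult.assoc)
    then have rD: "\<rho> * D = - (c / \<rho>) * A - (X / (4*\<rho>\<^sup>2*(\<rho>+2*c)\<^sup>2)) * T + (2 / \<rho>) * B - ((\<rho>+2*c) / \<rho>\<^sup>2) * C"
      unfolding e1 e2 e3 e4 by simp
    have "2 * \<rho> * sqrt ((\<rho> + c) / (\<rho> + 2*c)) * (- D / 2) = sqrt ((\<rho> + c) / (\<rho> + 2*c)) * (- (\<rho> * D))"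
      by simp
    also have "\<dots> = bF n c p (ebasis i) (ebasis j)"
      unfolding rD bF_def \<rho>_def[symmetric] A_def[symmetric] T_def[symmetric] B_def[symmetric] C_def[symmetric] X_def[symmetric]
      by simp
    finally show ?thesis .
  qed
  finally show ?thesis .
qed

definition proj :: "nat \<Rightarrow> real \<Rightarrow> (nat\<Rightarrow>real) \<Rightarrow> (nat\<Rightarrow>real) \<Rightarrow> (nat\<Rightarrow>real)" where
  "proj n c p v = v(2*n-1 := v (2*n-1) - theta n c p v)"

definition mkw :: "nat \<Rightarrow> (nat \<Rightarrow> complex) \<Rightarrow> (nat\<Rightarrow>real)" where
  "mkw n \<omega> = (\<lambda>k. if 2*n \<le> k \<and> k < 4*n then
       (if even k then Re (\<omega> ((k - 2*n) div 2)) else Im (\<omega> ((k - 2*n) div 2))) else 0)"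

lemma upd_cX: "k = 2*n-1 \<Longrightarrow> 1 \<le> a \<Longrightarrow> a < n \<Longrightarrow> cX n (v(k := y)) a = cX n v a"
  unfolding cX_def by (subgoal_tac "2*a-1 \<noteq> 2*n-1 \<and> 2*a \<noteq> 2*n-1") auto
lemma upd_cW: "k = 2*n-1 \<Longrightarrow> 1 \<le> n \<Longrightarrow> cW n (v(k := y)) a = cW n v a"
  unfolding cW_def by (subgoal_tac "2*n+2*a \<noteq> 2*n-1 \<and> 2*n+2*a+1 \<noteq> 2*n-1") auto
lemma upd_cphi: "k = 2*n-1 \<Longrightarrow> cphi n (v(k := y)) = y"
  by (simp add: cphi_def)
lemma upd_SX: "k = 2*n-1 \<Longrightarrow> SX n q (v(k := y)) = SX n q v"
  unfolding SX_def by (rule sum.cong) (auto simp: upd_cX)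
lemma upd_theta: "k = 2*n-1 \<Longrightarrow> 1 \<le> n \<Longrightarrow> theta n c q (v(k := y)) = theta n c q v - cphi n v + y"
  unfolding theta_def by (simp add: upd_SX upd_cW upd_cphi)

lemma proj_cX: "1 \<le> a \<Longrightarrow> a < n \<Longrightarrow> cX n (proj n c p v) a = cX n v a"
  unfolding proj_def by (rule upd_cX) auto
lemma proj_cW: "1 \<le> n \<Longrightarrow> cW n (proj n c p v) a = cW n v a"
  unfolding proj_def by (rule upd_cW) auto
lemma proj_theta: "1 \<le> n \<Longrightarrow> theta n c p (proj n c p v) = 0"
  unfolding proj_def by (subst upd_theta) (auto simp: cphi_def)

lemma mkw_cW: "a < n \<Longrightarrow> cW n (mkw n \<omega>) a = \<omega> a"
proof -
  assume a: "a < n"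
  have "(2 * n + 2 * a - 2 * n) div 2 = a" "(2 * n + 2 * a + 1 - 2 * n) div 2 = a" by auto
  then show ?thesis using a unfolding cW_def mkw_def by (simp add: complex_eq_iff)
qed
lemma mkw_cX: "1 \<le> a \<Longrightarrow> a < n \<Longrightarrow> cX n (mkw n \<omega>) a = 0"
  unfolding cX_def mkw_def by (subgoal_tac "\<not> 2*n \<le> 2*a-1 \<and> \<not> 2*n \<le> 2*a") (auto simp: complex_eq_iff)
lemma mkw_cphi: "1 \<le> n \<Longrightarrow> cphi n (mkw n \<omega>) = 0"
  unfolding cphi_def mkw_def by (subgoal_tac "\<not> 2*n \<le> 2*n-1") auto

definition uvec :: "nat \<Rightarrow> (nat\<Rightarrow>real) \<Rightarrow> complex \<Rightarrow> nat \<Rightarrow> complex" where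
  "uvec n p \<mu> = (\<lambda>j. if j = 0 then \<mu> else - \<mu> * cnj (cX n p j))"
definition kvec :: "nat \<Rightarrow> (nat\<Rightarrow>real) \<Rightarrow> nat \<Rightarrow> complex \<Rightarrow> nat \<Rightarrow> complex" where
  "kvec n p a \<mu> = (\<lambda>j. if j = 0 then - \<mu> * cX n p a else if j = a then \<mu> else 0)"

lemma bA_zero2: "(\<forall>a\<in>{1..<n}. cX n v a = 0) \<Longrightarrow> bA n q x v = 0"
proof -
  assume h: "\<forall>a\<in>{1..<n}. cX n v a = 0"
  have "SX n q v = 0" unfolding SX_def using h by simp
  moreover have "(\<Sum>a\<in>{1..<n}. Re (cX n x a * cnj (cX n v a))) = 0" using h by simp
  ultimately show ?thesis unfolding bA_def by simp
qed
lemma bB_zero2: "(\<forall>a<n. cW n v a = 0) \<Longrightarrow> n \<ge> 1 \<Longrightarrow> bB n x v = 0"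
  unfolding bB_def by simp
lemma bC_zero2: "ell n q v = 0 \<Longrightarrow> bC n q x v = 0"
  unfolding bC_def by simp

lemma ell_cW0: "(\<forall>a<n. cW n v a = 0) \<Longrightarrow> n \<ge> 1 \<Longrightarrow> ell n q v = 0"
  unfolding ell_def by simp

lemma Xnorm: "(\<Sum>a\<in>{1..<n}. cX n p a * cnj (cX n p a)) = complex_of_real (normX2 n p)"
  unfolding normX2_def by (simp add: complex_mult_cnj cmod_power2)

context
  fixes n :: nat and c :: real and p :: "nat \<Rightarrow> real"
  assumes n1: "n \<ge> 1" and c0: "c \<ge> 0" and r0: "p 0 > 0" and N1: "normX2 n p < 1"
begin

lemma bG_at: "bG n c p x v = alp c (p 0) * bA n p x v + bet c (p 0) * (theta n c p x * theta n c p v)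
   + gam (p 0) * bB n x v + del c (p 0) * bC n p x v"
  unfolding bG_def bT_def ..

lemma bF_at: "bF n c p x v = sqrt ((p 0 + c) / (p 0 + 2*c)) *
     (c / p 0 * bA n p x v + (2*(p 0)\<^sup>2 + 5*c*p 0 + 4*c\<^sup>2) / (4*(p 0)\<^sup>2*(p 0+2*c)\<^sup>2) * (theta n c p x * theta n c p v)
      - 2 / p 0 * bB n x v + (p 0 + 2*c) / (p 0)\<^sup>2 * bC n p x v)"
  unfolding bF_def bT_def ..

lemma eig_X:
  assumes k: "1 \<le> k" "k \<le> 2*n-2"
  shows "bF n c p x (proj n c p (ebasis k)) =
     c / (p 0 + c) * sqrt ((p 0 + c) / (p 0 + 2*c)) * bG n c p x (proj n c p (ebasis k))"
proof -
  let ?v = "proj n c p (ebasis k)"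
  have "cW n ?v a = cW n (ebasis k) a" for a by (rule proj_cW[OF n1])
  then have w: "\<forall>a<n. cW n ?v a = 0" using k n1 by (auto simp: cW_def ebasis_def complex_eq_iff)
  have B: "bB n x ?v = 0" by (rule bB_zero2[OF w n1])
  have C: "bC n p x ?v = 0" by (rule bC_zero2, rule ell_cW0[OF w n1])
  have T: "theta n c p ?v = 0" by (rule proj_theta[OF n1])
  define \<rho> where "\<rho> = p 0"
  define s where "s = sqrt ((\<rho> + c) / (\<rho> + 2*c))"
  have pos: "\<rho> + c > 0" "\<rho> > 0" using r0 c0 \<rho>_def by simp_all
  let ?A = "bA n p x ?v"
  have L: "bF n c p x ?v = s * (c / \<rho> * ?A)"
    unfolding bF_at B C T \<rho>_def[symmetric] s_def[symmetric] by simp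
  have R: "bG n c p x ?v = (\<rho> + c) / \<rho> * ?A"
    unfolding bG_at B C T alp_def \<rho>_def[symmetric] by simp
  have co: "c / \<rho> = c / (\<rho> + c) * ((\<rho> + c) / \<rho>)" using pos by (simp add: divide_simps)
  show ?thesis unfolding L R \<rho>_def[symmetric] s_def[symmetric] co by (simp only: ac_simps)
qed

lemma eig_phi:
  "bF n c p x (ebasis (2*n-1)) =
     (2*(p 0)\<^sup>2 + 5*c*p 0 + 4*c\<^sup>2) / ((p 0 + 2*c) * (p 0 + c)) * sqrt ((p 0 + c) / (p 0 + 2*c))
       * bG n c p x (ebasis (2*n-1))"
proof -
  let ?v = "ebasis (2*n-1)"
  have w: "\<forall>a<n. cW n ?v a = 0" using n1 by (auto simp: cW_def ebasis_def complex_eq_iff)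
  have xx: "\<forall>a\<in>{1..<n}. cX n ?v a = 0" using n1 by (auto simp: cX_def ebasis_def complex_eq_iff)
  have A: "bA n p x ?v = 0" by (rule bA_zero2[OF xx])
  have B: "bB n x ?v = 0" by (rule bB_zero2[OF w n1])
  have C: "bC n p x ?v = 0" by (rule bC_zero2, rule ell_cW0[OF w n1])
  have S: "SX n p ?v = 0" unfolding SX_def using xx by simp
  have T: "theta n c p ?v = 1" unfolding theta_def S using w n1 by (simp add: cphi_def ebasis_def)
  define \<rho> where "\<rho> = p 0"
  define s where "s = sqrt ((\<rho> + c) / (\<rho> + 2*c))"
  have pos: "\<rho> + c > 0" "\<rho> + 2*c > 0" "\<rho> > 0" using r0 c0 \<rho>_def by simp_all
  let ?X = "2*\<rho>\<^sup>2 + 5*c*\<rho> + 4*c\<^sup>2"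
  let ?t = "theta n c p x"
  have L: "bF n c p x ?v = s * (?X / (4*\<rho>\<^sup>2*(\<rho>+2*c)\<^sup>2) * ?t)"
    unfolding bF_at A B C T \<rho>_def[symmetric] s_def[symmetric] by simp
  have R: "bG n c p x ?v = (1 / (4 * \<rho>\<^sup>2) * ((\<rho> + c) / (\<rho> + 2*c))) * ?t"
    unfolding bG_at A B C T bet_def \<rho>_def[symmetric] by simp
  have co: "?X / (4*\<rho>\<^sup>2*(\<rho>+2*c)\<^sup>2) = ?X / ((\<rho> + 2*c) * (\<rho> + c)) * (1 / (4 * \<rho>\<^sup>2) * ((\<rho> + c) / (\<rho> + 2*c)))"
    using pos by (simp add: divide_simps power2_eq_square)
  show ?thesis unfolding L R \<rho>_def[symmetric] s_def[symmetric] co by (simp only: ac_simps)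
qed

lemma W_common:
  fixes \<omega> :: "nat \<Rightarrow> complex"
  defines "v \<equiv> proj n c p (mkw n \<omega>)"
  shows "\<forall>a\<in>{1..<n}. cX n v a = 0" "theta n c p v = 0" "\<forall>j<n. cW n v j = \<omega> j"
    "bA n p x v = 0"
proof -
  show xx: "\<forall>a\<in>{1..<n}. cX n v a = 0" unfolding v_def by (auto simp: proj_cX mkw_cX)
  show "theta n c p v = 0" unfolding v_def by (rule proj_theta[OF n1])
  show "\<forall>j<n. cW n v j = \<omega> j" unfolding v_def using n1 by (auto simp: proj_cW mkw_cW)
  show "bA n p x v = 0" by (rule bA_zero2[OF xx])
qed

lemma eig_u:
  fixes \<mu> :: complex
  defines "v \<equiv> proj n c p (mkw n (uvec n p \<mu>))"
  shows "bF n c p x v = (p 0 + 4*c) / (p 0 + 2*c) * sqrt ((p 0 + c) / (p 0 + 2*c)) * bG n c p x v"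
proof -
  note WC = W_common[where \<omega>="uvec n p \<mu>", folded v_def]
  have cw: "\<And>j. j < n \<Longrightarrow> cW n v j = uvec n p \<mu> j" using WC(3) by blast
  have cw0: "cW n v 0 = \<mu>" using cw[of 0] n1 by (simp add: uvec_def)
  have cwa: "\<And>a. a \<in> {1..<n} \<Longrightarrow> cW n v a = - \<mu> * cnj (cX n p a)" using cw by (auto simp: uvec_def)
  define R where "R = Re (ell n p x * cnj \<mu>)"
  have B: "bB n x v = R"
  proof -
    have "bB n x v = Re (cW n x 0 * cnj \<mu>) - (\<Sum>a\<in>{1..<n}. Re (cW n x a * cnj (- \<mu> * cnj (cX n p a))))"
      unfolding bB_def cw0 by (simp add: cwa)
    also have "\<dots> = Re (cW n x 0 * cnj \<mu>) + (\<Sum>a\<in>{1..<n}. Re (cX n p a * cW n x a * cnj \<mu>))"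
    proof -
      have e: "(\<Sum>a\<in>{1..<n}. Re (cW n x a * cnj (- \<mu> * cnj (cX n p a))))
          = - (\<Sum>a\<in>{1..<n}. Re (cX n p a * cW n x a * cnj \<mu>))"
        unfolding sum_negf[symmetric] by (rule sum.cong) (simp_all add: algebra_simps)
      show ?thesis unfolding e by (simp only: diff_minus_eq_add)
    qed
    also have "\<dots> = R" unfolding R_def ell_def by (simp add: distrib_right sum_distrib_right)
    finally show ?thesis .
  qed
  have ev: "ell n p v = \<mu> * (1 - complex_of_real (normX2 n p))"
  proof -
    have "ell n p v = \<mu> + (\<Sum>a\<in>{1..<n}. cX n p a * (- \<mu> * cnj (cX n p a)))"
      unfolding ell_def cw0 by (simp add: cwa)
    also have "\<dots> = \<mu> - \<mu> * (\<Sum>a\<in>{1..<n}. cX n p a * cnj (cX n p a))"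
    proof -
      have "(\<Sum>a\<in>{1..<n}. cX n p a * (- \<mu> * cnj (cX n p a))) = - (\<Sum>a\<in>{1..<n}. \<mu> * (cX n p a * cnj (cX n p a)))"
        unfolding sum_negf[symmetric] by (rule sum.cong) (simp_all add: algebra_simps)
      then show ?thesis by (simp add: sum_distrib_left[symmetric])
    qed
    finally show ?thesis unfolding Xnorm by (simp add: algebra_simps)
  qed
  have N: "1 - normX2 n p \<noteq> 0" using N1 by simp
  have C: "bC n p x v = 4 * R"
  proof -
    have "bC n p x v = 4 / (1 - normX2 n p) * Re (ell n p x * (cnj \<mu> * complex_of_real (1 - normX2 n p)))"
      unfolding bC_def ev by simp
    also have "\<dots> = 4 / (1 - normX2 n p) * ((1 - normX2 n p) * R)"
      unfolding R_def by (simp add: algebra_simps)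
    also have "\<dots> = 4 * R" using N by simp
    finally show ?thesis .
  qed
  define \<rho> where "\<rho> = p 0"
  define s where "s = sqrt ((\<rho> + c) / (\<rho> + 2*c))"
  have pos: "\<rho> + c > 0" "\<rho> + 2*c > 0" "\<rho> > 0" using r0 c0 \<rho>_def by simp_all
  have L: "bF n c p x v = s * ((- 2 / \<rho> + (\<rho> + 2*c) / \<rho>\<^sup>2 * 4) * R)"
    unfolding bF_at B C WC \<rho>_def[symmetric] s_def[symmetric] by (simp add: algebra_simps)
  have Rr: "bG n c p x v = (- (2 / \<rho>) + (\<rho> + c) / \<rho>\<^sup>2 * 4) * R"
    unfolding bG_at B C WC gam_def del_def \<rho>_def[symmetric] by (simp add: algebra_simps)
  have co: "- 2 / \<rho> + (\<rho> + 2*c) / \<rho>\<^sup>2 * 4 = (\<rho> + 4*c) / (\<rho> + 2*c) * (- (2 / \<rho>) + (\<rho> + c) / \<rho>\<^sup>2 * 4)"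
    using pos by (simp add: divide_simps power2_eq_square) (simp add: algebra_simps)
  show ?thesis unfolding L Rr \<rho>_def[symmetric] s_def[symmetric] co by (simp only: ac_simps)
qed

lemma eig_k:
  fixes \<mu> :: complex
  assumes a: "1 \<le> a" "a < n"
  defines "v \<equiv> proj n c p (mkw n (kvec n p a \<mu>))"
  shows "bF n c p x v = sqrt ((p 0 + c) / (p 0 + 2*c)) * bG n c p x v"
proof -
  note WC = W_common[where \<omega>="kvec n p a \<mu>", folded v_def]
  have cw: "\<And>j. j < n \<Longrightarrow> cW n v j = kvec n p a \<mu> j" using WC(3) by blast
  have cw0: "cW n v 0 = - \<mu> * cX n p a" using cw[of 0] n1 by (simp add: kvec_def)
  have cwa: "\<And>b. b \<in> {1..<n} \<Longrightarrow> cW n v b = (if b = a then \<mu> else 0)" using cw by (auto simp: kvec_def)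
  have ev: "ell n p v = 0"
  proof -
    have "ell n p v = - \<mu> * cX n p a + (\<Sum>b\<in>{1..<n}. cX n p b * (if b = a then \<mu> else 0))"
      unfolding ell_def cw0 by (simp add: cwa)
    also have "(\<Sum>b\<in>{1..<n}. cX n p b * (if b = a then \<mu> else 0)) = (\<Sum>b\<in>{1..<n}. if b = a then cX n p a * \<mu> else 0)"
      by (rule sum.cong) auto
    also have "\<dots> = cX n p a * \<mu>" using a by simp
    finally show ?thesis by simp
  qed
  have C: "bC n p x v = 0" by (rule bC_zero2[OF ev])
  define \<rho> where "\<rho> = p 0"
  define s where "s = sqrt ((\<rho> + c) / (\<rho> + 2*c))"
  show ?thesis unfolding bF_at bG_at C WC gam_def \<rho>_def[symmetric] s_def[symmetric]
    by (simp add: algebra_simps)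
qed

end

lemma cs_real:
  fixes f g :: "nat \<Rightarrow> real"
  assumes "finite I"
  shows "(\<Sum>i\<in>I. f i * g i)\<^sup>2 \<le> (\<Sum>i\<in>I. (f i)\<^sup>2) * (\<Sum>i\<in>I. (g i)\<^sup>2)"
proof -
  have S1: "(\<Sum>i\<in>I. \<Sum>j\<in>I. (f i)\<^sup>2 * (g j)\<^sup>2) = (\<Sum>i\<in>I. (f i)\<^sup>2) * (\<Sum>i\<in>I. (g i)\<^sup>2)"
    by (simp add: sum_product)
  have S2: "(\<Sum>i\<in>I. \<Sum>j\<in>I. (f j)\<^sup>2 * (g i)\<^sup>2) = (\<Sum>i\<in>I. (f i)\<^sup>2) * (\<Sum>i\<in>I. (g i)\<^sup>2)"
    by (subst sum.swap) (simp add: sum_product)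
  have S3: "(\<Sum>i\<in>I. \<Sum>j\<in>I. (f i * g i) * (f j * g j)) = (\<Sum>i\<in>I. f i * g i)\<^sup>2"
    by (simp add: sum_product power2_eq_square)
  have E: "\<And>i j. (f i * g j - f j * g i)\<^sup>2 = (f i)\<^sup>2 * (g j)\<^sup>2 + (f j)\<^sup>2 * (g i)\<^sup>2 - 2 * ((f i * g i) * (f j * g j))"
    by (simp add: power2_eq_square algebra_simps)
  have "0 \<le> (\<Sum>i\<in>I. \<Sum>j\<in>I. (f i * g j - f j * g i)\<^sup>2)"
    by (intro sum_nonneg) simp
  also have "\<dots> = (\<Sum>i\<in>I. \<Sum>j\<in>I. (f i)\<^sup>2 * (g j)\<^sup>2) + (\<Sum>i\<in>I. \<Sum>j\<in>I. (f j)\<^sup>2 * (g i)\<^sup>2)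
      - 2 * (\<Sum>i\<in>I. \<Sum>j\<in>I. (f i * g i) * (f j * g j))"
    unfolding E by (simp add: sum.distrib sum_subtractf sum_distrib_left)
  finally show ?thesis unfolding S1 S2 S3 by simp
qed

lemma cs_complex:
  fixes X W :: "nat \<Rightarrow> complex"
  assumes "finite I"
  shows "(cmod (\<Sum>i\<in>I. X i * W i))\<^sup>2 \<le> (\<Sum>i\<in>I. (cmod (X i))\<^sup>2) * (\<Sum>i\<in>I. (cmod (W i))\<^sup>2)"
proof -
  have "cmod (\<Sum>i\<in>I. X i * W i) \<le> (\<Sum>i\<in>I. cmod (X i) * cmod (W i))"
    by (rule order_trans[OF norm_sum]) (simp add: norm_mult)
  then have "(cmod (\<Sum>i\<in>I. X i * W i))\<^sup>2 \<le> (\<Sum>i\<in>I. cmod (X i) * cmod (W i))\<^sup>2"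
    by (simp add: power_mono)
  also have "\<dots> \<le> (\<Sum>i\<in>I. (cmod (X i))\<^sup>2) * (\<Sum>i\<in>I. (cmod (W i))\<^sup>2)"
    by (rule cs_real[OF assms])
  finally show ?thesis .
qed

lemma Hpos:
  fixes X W :: "nat \<Rightarrow> complex" and Vz :: complex and N K :: real
  assumes I: "finite I" and Nd: "N = (\<Sum>a\<in>I. (cmod (X a))\<^sup>2)" and N1: "N < 1" and K: "K \<ge> 1"
  defines "H \<equiv> (\<Sum>a\<in>I. (cmod (W a))\<^sup>2) - (cmod Vz)\<^sup>2 + 2 * K / (1 - N) * (cmod (Vz + (\<Sum>a\<in>I. X a * W a)))\<^sup>2"
  shows "H \<ge> 0" "Vz \<noteq> 0 \<or> (\<exists>a\<in>I. W a \<noteq> 0) \<Longrightarrow> H > 0"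
proof -
  define b2 where "b2 = (\<Sum>a\<in>I. (cmod (W a))\<^sup>2)"
  define b where "b = sqrt b2"
  define r where "r = sqrt N"
  define y where "y = (\<Sum>a\<in>I. X a * W a)"
  define t where "t = cmod (Vz + y)"
  have b2n: "b2 \<ge> 0" unfolding b2_def by (simp add: sum_nonneg)
  have Nn: "N \<ge> 0" unfolding Nd by (simp add: sum_nonneg)
  have bb: "b\<^sup>2 = b2" "b \<ge> 0" unfolding b_def using b2n by simp_all
  have rr: "r\<^sup>2 = N" "r \<ge> 0" unfolding r_def using Nn by simp_all
  have tn: "t \<ge> 0" unfolding t_def by simp
  have N1': "1 - N > 0" using N1 by simp
  have "(cmod y)\<^sup>2 \<le> N * b2" unfolding y_def Nd b2_def by (rule cs_complex[OF I])
  also have "\<dots> = (r * b)\<^sup>2" using bb rr by (simp add: power_mult_distrib)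
  finally have "cmod y \<le> r * b" by (rule power2_le_imp_le) (simp add: rr(2) bb(2))
  moreover have "cmod Vz \<le> t + cmod y"
  proof -
    have "Vz = (Vz + y) - y" by simp
    then have "cmod Vz = cmod ((Vz + y) - y)" by simp
    also have "\<dots> \<le> cmod (Vz + y) + cmod y" by (rule norm_triangle_ineq4)
    finally show ?thesis unfolding t_def .
  qed
  ultimately have w0: "cmod Vz \<le> t + r * b" by simp
  then have w02: "(cmod Vz)\<^sup>2 \<le> (t + r * b)\<^sup>2" by (intro power_mono) simp_all
  define \<Phi> where "\<Phi> = b2 - (t + r*b)\<^sup>2 + 2 / (1 - N) * t\<^sup>2"
  have "2 / (1 - N) * t\<^sup>2 \<le> 2 * K / (1 - N) * t\<^sup>2"
    using K N1' by (intro mult_right_mono divide_right_mono) simp_all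
  then have HP: "H \<ge> \<Phi>" unfolding H_def \<Phi>_def b2_def[symmetric] y_def[symmetric] t_def[symmetric]
    using w02 by linarith
  have id: "(1 - N) * \<Phi> = ((1 - N) * b - r * t)\<^sup>2 + t\<^sup>2"
  proof -
    have "(1 - N) * (2 / (1 - N) * t\<^sup>2) = 2 * t\<^sup>2" using N1' by simp
    then have "(1 - N) * \<Phi> = (1 - N) * (b2 - (t + r*b)\<^sup>2) + 2 * t\<^sup>2"
      unfolding \<Phi>_def by (simp add: distrib_left right_diff_distrib)
    also have "\<dots> = ((1 - N) * b - r * t)\<^sup>2 + t\<^sup>2"
      unfolding bb(1)[symmetric] rr(1)[symmetric] by (simp add: power2_eq_square algebra_simps)
    finally show ?thesis .
  qed
  have Pn: "(1 - N) * \<Phi> \<ge> 0" unfolding id by simp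
  then have "\<Phi> \<ge> 0" using N1' by (simp add: zero_le_mult_iff)
  then show "H \<ge> 0" using HP by simp
  assume nz: "Vz \<noteq> 0 \<or> (\<exists>a\<in>I. W a \<noteq> 0)"
  show "H > 0"
  proof (rule ccontr)
    assume "\<not> H > 0"
    then have "\<Phi> \<le> 0" using HP by simp
    then have "(1 - N) * \<Phi> \<le> 0" using N1' by (simp add: mult_nonneg_nonpos)
    then have z: "((1 - N) * b - r * t)\<^sup>2 + t\<^sup>2 = 0" using Pn id by linarith
    then have t0: "t = 0" by (simp add: add_nonneg_eq_0_iff)
    with z have "(1 - N) * b = 0" by simp
    then have b0: "b = 0" using N1' by simp
    then have "b2 = 0" using bb by simp
    then have Wz: "\<forall>a\<in>I. W a = 0" unfolding b2_def using I by (simp add: sum_nonneg_eq_0_iff)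
    have "cmod Vz \<le> 0" using w0 t0 b0 by simp
    then have "Vz = 0" by simp
    with Wz nz show False by blast
  qed
qed

lemma index_cases:
  assumes n1: "n \<ge> 1" and i: "i \<in> {1..<4*n}" and vi: "v i \<noteq> 0"
  shows "(\<exists>j<n. cW n v j \<noteq> 0) \<or> (\<exists>a\<in>{1..<n}. cX n v a \<noteq> 0) \<or> cphi n v \<noteq> 0"
proof -
  consider "i \<le> 2*n - 2" | "i = 2*n - 1" | "i \<ge> 2*n" using i by linarith
  then show ?thesis
  proof cases
    case 1
    define a where "a = (i + 1) div 2"
    have a: "a \<in> {1..<n}" "i = 2*a - 1 \<or> i = 2*a" using 1 i unfolding a_def by auto
    then have "cX n v a \<noteq> 0" using vi unfolding cX_def by (auto simp: complex_eq_iff)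
    then show ?thesis using a by blast
  next
    case 2 then show ?thesis using vi by (simp add: cphi_def)
  next
    case 3
    define j where "j = (i - 2*n) div 2"
    have j: "j < n" "i = 2*n + 2*j \<or> i = 2*n + 2*j + 1" using 3 i unfolding j_def by auto
    then have "cW n v j \<noteq> 0" using vi unfolding cW_def by (auto simp: complex_eq_iff)
    then show ?thesis using j by blast
  qed
qed

context
  fixes n :: nat and c :: real and p :: "nat \<Rightarrow> real"
  assumes n1: "n \<ge> 1" and c0: "c \<ge> 0" and r0: "p 0 > 0" and N1: "normX2 n p < 1"
begin

lemma bA_self: "bA n p v v \<ge> (\<Sum>a\<in>{1..<n}. (cmod (cX n v a))\<^sup>2) / (1 - normX2 n p)"
proof -
  have N': "1 - normX2 n p > 0" using N1 by simp
  have e: "bA n p v v = 1 / (1 - normX2 n p) * ((\<Sum>a\<in>{1..<n}. (cmod (cX n v a))\<^sup>2)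
      + 1 / (1 - normX2 n p) * (cmod (SX n p v))\<^sup>2)"
    unfolding bA_def cm2 ..
  have "(\<Sum>a\<in>{1..<n}. (cmod (cX n v a))\<^sup>2) \<le> (\<Sum>a\<in>{1..<n}. (cmod (cX n v a))\<^sup>2)
      + 1 / (1 - normX2 n p) * (cmod (SX n p v))\<^sup>2" using N' by simp
  then show ?thesis unfolding e using N' by (simp add: divide_right_mono)
qed

lemma pos_generic:
  assumes k1: "k1 > 0" and k2: "k2 > 0" and K: "K \<ge> 1"
    and nz: "\<exists>i\<in>{1..<4*n}. v i \<noteq> 0"
  shows "k1 * bA n p v v + k2 * (theta n c p v)\<^sup>2 + 2 / p 0 * ((\<Sum>a\<in>{1..<n}. (cmod (cW n v a))\<^sup>2)
     - (cmod (cW n v 0))\<^sup>2 + 2 * K / (1 - normX2 n p) * (cmod (ell n p v))\<^sup>2) > 0"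
proof -
  let ?H = "(\<Sum>a\<in>{1..<n}. (cmod (cW n v a))\<^sup>2) - (cmod (cW n v 0))\<^sup>2
      + 2 * K / (1 - normX2 n p) * (cmod (ell n p v))\<^sup>2"
  have Hdef: "?H = (\<Sum>a\<in>{1..<n}. (cmod (cW n v a))\<^sup>2) - (cmod (cW n v 0))\<^sup>2
      + 2 * K / (1 - normX2 n p) * (cmod (cW n v 0 + (\<Sum>a\<in>{1..<n}. cX n p a * cW n v a)))\<^sup>2"
    unfolding ell_def ..
  have Nd: "normX2 n p = (\<Sum>a\<in>{1..<n}. (cmod (cX n p a))\<^sup>2)" unfolding normX2_def ..
  note HP = Hpos[OF finite_atLeastLessThan Nd N1 K, where W="cW n v" and Vz="cW n v 0", folded Hdef]
  have N': "1 - normX2 n p > 0" using N1 by simp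
  have A0: "bA n p v v \<ge> 0"
    using bA_self order_trans[OF _ bA_self] N' by (simp add: sum_nonneg)
  have H0: "?H \<ge> 0" by (rule HP(1))
  have r: "2 / p 0 > 0" using r0 by simp
  have t0: "k2 * (theta n c p v)\<^sup>2 \<ge> 0" using k2 by simp
  have a0: "k1 * bA n p v v \<ge> 0" using k1 A0 by simp
  have h0: "2 / p 0 * ?H \<ge> 0" using r H0 by simp
  from index_cases[OF n1] nz
  consider (W) "\<exists>j<n. cW n v j \<noteq> 0" | (X) "\<exists>a\<in>{1..<n}. cX n v a \<noteq> 0"
    | (P) "\<not> (\<exists>j<n. cW n v j \<noteq> 0)" "\<not> (\<exists>a\<in>{1..<n}. cX n v a \<noteq> 0)" "cphi n v \<noteq> 0" by blast
  then show ?thesis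
  proof cases
    case W
    then have "cW n v 0 \<noteq> 0 \<or> (\<exists>a\<in>{1..<n}. cW n v a \<noteq> 0)"
      by (metis atLeastLessThan_iff bot_nat_0.not_eq_extremum less_eq_Suc_le One_nat_def)
    then have "?H > 0" by (rule HP(2))
    then have "2 / p 0 * ?H > 0" using r by simp
    then show ?thesis using t0 a0 by linarith
  next
    case X
    then obtain a where a: "a \<in> {1..<n}" "cX n v a \<noteq> 0" by blast
    have "(\<Sum>a\<in>{1..<n}. (cmod (cX n v a))\<^sup>2) > 0"
      by (rule sum_pos2[OF finite_atLeastLessThan a(1)]) (use a in simp_all)
    then have "bA n p v v > 0" using bA_self[of v] N' by (smt (verit) divide_pos_pos)
    then have "k1 * bA n p v v > 0" using k1 by simp
    then show ?thesis using t0 h0 by linarith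
  next
    case P
    have xx: "\<forall>a\<in>{1..<n}. cX n v a = 0" using P(2) by blast
    have ww: "\<forall>j<n. cW n v j = 0" using P(1) by blast
    have S: "SX n p v = 0" unfolding SX_def using xx by simp
    have "theta n c p v = cphi n v" unfolding theta_def S using ww n1 by simp
    then have "k2 * (theta n c p v)\<^sup>2 > 0" using P(3) k2 by simp
    then show ?thesis using a0 h0 by linarith
  qed
qed

lemma bB_self: "bB n v v = (cmod (cW n v 0))\<^sup>2 - (\<Sum>a\<in>{1..<n}. (cmod (cW n v a))\<^sup>2)"
  unfolding bB_def cm2 ..
lemma bC_self: "bC n p v v = 4 / (1 - normX2 n p) * (cmod (ell n p v))\<^sup>2"
  unfolding bC_def cm2 ..

lemma coefG: fixes \<rho> M Wsq W0sq L :: real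
  assumes "\<rho> > 0" "M > 0"
  shows "gam \<rho> * (W0sq - Wsq) + del c \<rho> * (4 / M * L) = 2 / \<rho> * (Wsq - W0sq + 2 * ((\<rho> + c) / \<rho>) / M * L)"
  unfolding gam_def del_def using assms by (simp add: field_simps power2_eq_square)
lemma coefF: fixes \<rho> M Wsq W0sq L :: real
  assumes "\<rho> > 0" "M > 0"
  shows "- (2 / \<rho>) * (W0sq - Wsq) + (\<rho> + 2*c) / \<rho>\<^sup>2 * (4 / M * L) = 2 / \<rho> * (Wsq - W0sq + 2 * ((\<rho> + 2*c) / \<rho>) / M * L)"
  using assms by (simp add: field_simps power2_eq_square)

lemma bG_pos:
  assumes nz: "\<exists>i\<in>{1..<4*n}. v i \<noteq> 0"
  shows "bG n c p v v > 0"
proof -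
  have N': "1 - normX2 n p > 0" using N1 by simp
  have K: "(p 0 + c) / p 0 \<ge> 1" using r0 c0 by simp
  have k1: "alp c (p 0) > 0" unfolding alp_def using r0 c0 by simp
  have k2: "bet c (p 0) > 0" unfolding bet_def using r0 c0 by simp
  have "bG n c p v v = alp c (p 0) * bA n p v v + bet c (p 0) * (theta n c p v)\<^sup>2
     + (gam (p 0) * bB n v v + del c (p 0) * bC n p v v)"
    unfolding bG_def bT_def by (simp add: power2_eq_square)
  also have "gam (p 0) * bB n v v + del c (p 0) * bC n p v v = 2 / p 0 * ((\<Sum>a\<in>{1..<n}. (cmod (cW n v a))\<^sup>2)
     - (cmod (cW n v 0))\<^sup>2 + 2 * ((p 0 + c) / p 0) / (1 - normX2 n p) * (cmod (ell n p v))\<^sup>2)"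
    unfolding bB_self bC_self by (rule coefG[OF r0 N'])
  finally show ?thesis using pos_generic[OF k1 k2 K nz] by simp
qed

lemma bF_pos:
  assumes nz: "\<exists>i\<in>{1..<4*n}. v i \<noteq> 0" and cp: "c > 0"
  shows "bF n c p v v > 0"
proof -
  have N': "1 - normX2 n p > 0" using N1 by simp
  have K: "(p 0 + 2*c) / p 0 \<ge> 1" using r0 c0 by simp
  have k1: "c / p 0 > 0" using r0 cp by simp
  have k2: "(2*(p 0)\<^sup>2 + 5*c*p 0 + 4*c\<^sup>2) / (4*(p 0)\<^sup>2*(p 0+2*c)\<^sup>2) > 0"
    using r0 c0 by (intro divide_pos_pos) (simp_all add: add_pos_nonneg)
  have s: "sqrt ((p 0 + c) / (p 0 + 2*c)) > 0" using r0 c0 by simp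
  have "bF n c p v v = sqrt ((p 0 + c) / (p 0 + 2*c)) * (c / p 0 * bA n p v v
      + (2*(p 0)\<^sup>2 + 5*c*p 0 + 4*c\<^sup>2) / (4*(p 0)\<^sup>2*(p 0+2*c)\<^sup>2) * (theta n c p v)\<^sup>2
     + (- (2 / p 0) * bB n v v + (p 0 + 2*c) / (p 0)\<^sup>2 * bC n p v v))"
    unfolding bF_def bT_def by (simp add: power2_eq_square)
  also have "- (2 / p 0) * bB n v v + (p 0 + 2*c) / (p 0)\<^sup>2 * bC n p v v = 2 / p 0 * ((\<Sum>a\<in>{1..<n}. (cmod (cW n v a))\<^sup>2)
     - (cmod (cW n v 0))\<^sup>2 + 2 * ((p 0 + 2*c) / p 0) / (1 - normX2 n p) * (cmod (ell n p v))\<^sup>2)"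
    unfolding bB_self bC_self by (rule coefF[OF r0 N'])
  finally show ?thesis using pos_generic[OF k1 k2 K nz] s by simp
qed

end

lemma lin4: "(s::real) * (k1*(a1+a2) + k2*(t1+t2) - k3*(b1+b2) + k4*(c1+c2))
   = s*(k1*a1 + k2*t1 - k3*b1 + k4*c1) + s*(k1*a2 + k2*t2 - k3*b2 + k4*c2)"
  by (simp add: algebra_simps)
lemma lin4s: "(s::real) * (k1*(t*a) + k2*(t*b) - k3*(t*d) + k4*(t*e)) = t * (s*(k1*a + k2*b - k3*d + k4*e))"
  by (simp add: algebra_simps)
lemma bF_add: "bF n c p (\<lambda>k. x k + y k) w = bF n c p x w + bF n c p y w"
  unfolding bF_def bA_add bT_add bB_add bC_add by (rule lin4)
lemma bF_scale: "bF n c p (\<lambda>k. t * x k) w = t * bF n c p x w"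
  unfolding bF_def bA_scale bT_scale bB_scale bC_scale by (rule lin4s)
lemma bF_sym: "bF n c p v w = bF n c p w v"
  by (simp add: bF_def bA_sym bT_sym bB_sym bC_sym)
lemma linR_bF1: "linR (\<lambda>v. bF n c p v w)"
  unfolding linR_def by (simp add: bF_add bF_scale)
lemma linR_bF2: "linR (\<lambda>v. bF n c p w v)"
  using linR_bF1[of n c p w] unfolding linR_def by (metis bF_sym)

lemma supp_expand:
  assumes "\<And>i. i = 0 \<or> i \<ge> m + 1 \<Longrightarrow> f i = 0"
  shows "f = (\<lambda>i. \<Sum>r<m. f (r+1) * ebasis (r+1) i)"
proof
  fix i
  show "f i = (\<Sum>r<m. f (r+1) * ebasis (r+1) i)"
  proof (cases "i = 0")
    case True then show ?thesis using assms by (simp add: ebasis_def)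
  next
    case False
    have "(\<Sum>r<m. f (r+1) * ebasis (r+1) i) = (\<Sum>r<m. if r = i - 1 then f i else 0)"
      by (rule sum.cong) (use False in \<open>auto simp: ebasis_def\<close>)
    also have "\<dots> = (if i - 1 < m then f i else 0)" by simp
    also have "\<dots> = f i" using assms False by auto
    finally show ?thesis by simp
  qed
qed

lemma linR_expand:
  assumes L: "linR L" and f: "\<And>i. i = 0 \<or> i \<ge> m + 1 \<Longrightarrow> f i = 0"
  shows "L f = (\<Sum>r<m. f (r+1) * L (ebasis (r+1)))"
proof -
  have e: "f = (\<lambda>i. \<Sum>r<m. f (r+1) * ebasis (r+1) i)" by (rule supp_expand[OF f])
  have "L f = L (\<lambda>i. \<Sum>r<m. f (r+1) * ebasis (r+1) i)" by (rule arg_cong[where f=L, OF e])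
  also have "\<dots> = (\<Sum>r<m. f (r+1) * L (ebasis (r+1)))"
    by (rule linR_sum_scaled[OF L]) simp
  finally show ?thesis .
qed

definition Evec :: "nat \<Rightarrow> real \<Rightarrow> (nat\<Rightarrow>real) \<Rightarrow> nat \<Rightarrow> (nat \<Rightarrow> real)" where
  "Evec n c p k = (if k \<le> 2*n-2 then proj n c p (ebasis k) else if k = 2*n-1 then ebasis k else
     proj n c p (mkw n (if (k - 2*n) div 2 = 0 then uvec n p (if even k then 1 else \<i>)
        else kvec n p ((k - 2*n) div 2) (if even k then 1 else \<i>))))"

definition lamv :: "nat \<Rightarrow> real \<Rightarrow> real \<Rightarrow> nat \<Rightarrow> real" where
  "lamv n c \<rho> k = (let s = sqrt ((\<rho> + c) / (\<rho> + 2*c)) in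
     if k \<le> 2*n-2 then c / (\<rho> + c) * s
     else if k = 2*n-1 then (2*\<rho>\<^sup>2 + 5*c*\<rho> + 4*c\<^sup>2) / ((\<rho> + 2*c) * (\<rho> + c)) * s
     else if k \<le> 2*n+1 then (\<rho> + 4*c) / (\<rho> + 2*c) * s
     else s)"

lemma proj_other: "i \<noteq> 2*n-1 \<Longrightarrow> proj n c p v i = v i"
  unfolding proj_def by simp

definition muk :: "nat \<Rightarrow> complex" where "muk k = (if even k then 1 else \<i>)"

lemma Evec_c1: "k \<le> 2*n-2 \<Longrightarrow> Evec n c p k = proj n c p (ebasis k)"
  unfolding Evec_def by (rule if_P)
lemma Evec_c2: "\<not> k \<le> 2*n-2 \<Longrightarrow> k = 2*n-1 \<Longrightarrow> Evec n c p k = ebasis k"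
  unfolding Evec_def by (simp only: if_not_P if_P if_False if_True)
lemma Evec_c3: "\<not> k \<le> 2*n-2 \<Longrightarrow> k \<noteq> 2*n-1 \<Longrightarrow> (k - 2*n) div 2 = 0 \<Longrightarrow>
    Evec n c p k = proj n c p (mkw n (uvec n p (muk k)))"
  unfolding Evec_def muk_def by (simp only: if_not_P if_P if_False if_True)
lemma Evec_c4: "\<not> k \<le> 2*n-2 \<Longrightarrow> k \<noteq> 2*n-1 \<Longrightarrow> (k - 2*n) div 2 \<noteq> 0 \<Longrightarrow>
    Evec n c p k = proj n c p (mkw n (kvec n p ((k - 2*n) div 2) (muk k)))"
  unfolding Evec_def muk_def by (simp only: if_not_P if_P if_False if_True)

lemma lamv_c1: "k \<le> 2*n-2 \<Longrightarrow> lamv n c \<rho> k = c / (\<rho> + c) * sqrt ((\<rho> + c) / (\<rho> + 2*c))"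
  unfolding lamv_def Let_def by (rule if_P)
lemma lamv_c2: "\<not> k \<le> 2*n-2 \<Longrightarrow> k = 2*n-1 \<Longrightarrow>
    lamv n c \<rho> k = (2*\<rho>\<^sup>2 + 5*c*\<rho> + 4*c\<^sup>2) / ((\<rho> + 2*c) * (\<rho> + c)) * sqrt ((\<rho> + c) / (\<rho> + 2*c))"
  unfolding lamv_def Let_def by (simp only: if_not_P if_P if_False if_True)
lemma lamv_c3: "\<not> k \<le> 2*n-2 \<Longrightarrow> k \<noteq> 2*n-1 \<Longrightarrow> k \<le> 2*n+1 \<Longrightarrow>
    lamv n c \<rho> k = (\<rho> + 4*c) / (\<rho> + 2*c) * sqrt ((\<rho> + c) / (\<rho> + 2*c))"
  unfolding lamv_def Let_def by (simp only: if_not_P if_P if_False if_True)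
lemma lamv_c4: "\<not> k \<le> 2*n-2 \<Longrightarrow> k \<noteq> 2*n-1 \<Longrightarrow> \<not> k \<le> 2*n+1 \<Longrightarrow>
    lamv n c \<rho> k = sqrt ((\<rho> + c) / (\<rho> + 2*c))"
  unfolding lamv_def Let_def by (simp only: if_not_P if_P if_False if_True)

lemma Evec_supp: assumes "1 \<le> n" "1 \<le> k" "k \<le> 4*n-1" "i = 0 \<or> i \<ge> 4*n" shows "Evec n c p k i = 0"
proof -
  have i: "i \<noteq> 2*n-1" "i \<noteq> k" using assms by auto
  have m: "mkw n \<omega> i = 0" for \<omega> unfolding mkw_def using assms by auto
  have e: "ebasis k i = 0" using i by (simp add: ebasis_def)
  consider "k \<le> 2*n-2" | "\<not> k \<le> 2*n-2" "k = 2*n-1" | "\<not> k \<le> 2*n-2" "k \<noteq> 2*n-1" "(k - 2*n) div 2 = 0"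
    | "\<not> k \<le> 2*n-2" "k \<noteq> 2*n-1" "(k - 2*n) div 2 \<noteq> 0" by blast
  then show ?thesis
  proof cases
    case 1 then show ?thesis using e by (simp add: Evec_c1 proj_other[OF i(1)])
  next
    case 2 then show ?thesis using e by (simp add: Evec_c2)
  next
    case 3 then show ?thesis using m by (simp add: Evec_c3 proj_other[OF i(1)])
  next
    case 4 then show ?thesis using m by (simp add: Evec_c4 proj_other[OF i(1)])
  qed
qed

context
  fixes n :: nat and c :: real and p :: "nat \<Rightarrow> real"
  assumes n1: "n \<ge> 1" and c0: "c \<ge> 0" and r0: "p 0 > 0" and N1: "normX2 n p < 1"
begin

lemma eigen:
  assumes k: "1 \<le> k" "k \<le> 4*n-1"
  shows "bF n c p x (Evec n c p k) = lamv n c (p 0) k * bG n c p x (Evec n c p k)"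
proof -
  consider "k \<le> 2*n-2" | "\<not> k \<le> 2*n-2" "k = 2*n-1"
    | "\<not> k \<le> 2*n-2" "k \<noteq> 2*n-1" "k \<le> 2*n+1"
    | "\<not> k \<le> 2*n-2" "k \<noteq> 2*n-1" "\<not> k \<le> 2*n+1" by blast
  then show ?thesis
  proof cases
    case 1
    show ?thesis unfolding Evec_c1[OF 1] lamv_c1[OF 1] by (rule eig_X[OF n1 c0 r0 N1 k(1) 1])
  next
    case 2
    have h: "bF n c p x (ebasis k) = (2*(p 0)\<^sup>2 + 5*c*p 0 + 4*c\<^sup>2) / ((p 0 + 2*c) * (p 0 + c)) * sqrt ((p 0 + c) / (p 0 + 2*c))
       * bG n c p x (ebasis k)" using eig_phi[OF n1 c0 r0 N1, of x] 2(2) by simp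
    show ?thesis unfolding Evec_c2[OF 2] lamv_c2[OF 2] by (rule h)
  next
    case 3
    then have j: "(k - 2*n) div 2 = 0" by auto
    show ?thesis unfolding Evec_c3[OF 3(1,2) j] lamv_c3[OF 3] by (rule eig_u[OF n1 c0 r0 N1])
  next
    case 4
    define a where "a = (k - 2*n) div 2"
    have a: "1 \<le> a" "a < n" using 4 k unfolding a_def by auto
    have j: "(k - 2*n) div 2 \<noteq> 0" using a a_def by simp
    show ?thesis unfolding Evec_c4[OF 4(1,2) j] lamv_c4[OF 4] a_def[symmetric]
      by (rule eig_k[OF n1 c0 r0 N1 a])
  qed
qed

end

lemma sum_pairs:
  fixes a k :: nat and g :: "nat \<Rightarrow> 'a::comm_monoid_add"
  shows "(\<Sum>c\<in>{a..<a+2*k}. g c) = (\<Sum>b<k. g (a + 2*b) + g (a + 2*b + 1))"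
proof (induction k)
  case 0 then show ?case by simp
next
  case (Suc k)
  have "{a..<a+2*Suc k} = {a..<a+2*k} \<union> {a+2*k, a+2*k+1}" by auto
  moreover have "{a..<a+2*k} \<inter> {a+2*k, a+2*k+1} = {}" by auto
  ultimately have "(\<Sum>c\<in>{a..<a+2*Suc k}. g c) = (\<Sum>c\<in>{a..<a+2*k}. g c) + (g (a+2*k) + g (a+2*k+1))"
    by (simp add: sum.union_disjoint add_ac)
  then show ?case using Suc by simp
qed

lemma cW_sum: "cW n (\<lambda>i. \<Sum>c\<in>I. y c * f c i) j = (\<Sum>c\<in>I. complex_of_real (y c) * cW n (f c) j)"
  unfolding cW_def by (simp add: complex_eq_iff sum_distrib_left)

definition base :: "nat \<Rightarrow> (nat\<Rightarrow>real) \<Rightarrow> nat \<Rightarrow> nat \<Rightarrow> complex" where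
  "base n p b = (if b = 0 then uvec n p 1 else kvec n p b 1)"

lemma uvec_mu: "uvec n p \<mu> j = \<mu> * uvec n p 1 j" unfolding uvec_def by simp
lemma kvec_mu: "kvec n p a \<mu> j = \<mu> * kvec n p a 1 j" unfolding kvec_def by simp

lemma muk_even: "muk (2*n + 2*b) = 1" unfolding muk_def by simp
lemma muk_odd: "muk (2*n + 2*b + 1) = \<i>" unfolding muk_def by simp

context
  fixes n :: nat and c :: real and p :: "nat \<Rightarrow> real"
  assumes n1: "n \<ge> 1"
begin

lemma cW_Evec_low: "k \<le> 2*n-1 \<Longrightarrow> cW n (Evec n c p k) j = 0"
proof -
  assume k: "k \<le> 2*n-1"
  show ?thesis
  proof (cases "k \<le> 2*n-2")
    case True
    have "cW n (proj n c p (ebasis k)) j = cW n (ebasis k) j" by (rule proj_cW[OF n1])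
    also have "\<dots> = 0" unfolding cW_def ebasis_def using True n1 by (auto simp: complex_eq_iff)
    finally show ?thesis unfolding Evec_c1[OF True] .
  next
    case False
    then have "k = 2*n-1" using k by simp
    then show ?thesis unfolding Evec_c2[OF False \<open>k = 2*n-1\<close>] cW_def ebasis_def
      using n1 by (auto simp: complex_eq_iff)
  qed
qed

lemma cW_Evec_high: "2*n \<le> k \<Longrightarrow> j < n \<Longrightarrow> cW n (Evec n c p k) j = muk k * base n p ((k - 2*n) div 2) j"
proof -
  assume k: "2*n \<le> k" and j: "j < n"
  have a: "\<not> k \<le> 2*n-2" "k \<noteq> 2*n-1" using k n1 by auto
  show ?thesis
  proof (cases "(k - 2*n) div 2 = 0")
    case True
    then show ?thesis unfolding Evec_c3[OF a True] proj_cW[OF n1] mkw_cW[OF j] base_def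
      by (simp add: uvec_mu[of n p "muk k"])
  next
    case False
    then show ?thesis unfolding Evec_c4[OF a False] proj_cW[OF n1] mkw_cW[OF j] base_def
      by (simp add: kvec_mu[of n p _ "muk k"])
  qed
qed

lemma cW_V:
  assumes j: "j < n"
  shows "cW n (\<lambda>i. \<Sum>t<4*n-1. y t * Evec n c p (t+1) i) j =
    (\<Sum>b<n. (complex_of_real (y (2*n-1+2*b)) + \<i> * complex_of_real (y (2*n+2*b))) * base n p b j)"
proof -
  let ?g = "\<lambda>t. complex_of_real (y t) * cW n (Evec n c p (t+1)) j"
  have "cW n (\<lambda>i. \<Sum>t<4*n-1. y t * Evec n c p (t+1) i) j = (\<Sum>t<4*n-1. ?g t)"
    by (rule cW_sum)
  also have "\<dots> = (\<Sum>t\<in>{..<2*n-1} \<union> {2*n-1..<(2*n-1)+2*n}. ?g t)"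
    using n1 by (intro sum.cong) auto
  also have "\<dots> = (\<Sum>t\<in>{..<2*n-1}. ?g t) + (\<Sum>t\<in>{2*n-1..<(2*n-1)+2*n}. ?g t)"
    by (rule sum.union_disjoint) auto
  also have "(\<Sum>t\<in>{..<2*n-1}. ?g t) = 0"
    by (rule sum.neutral) (auto intro!: cW_Evec_low)
  also have "(\<Sum>t\<in>{2*n-1..<(2*n-1)+2*n}. ?g t) = (\<Sum>b<n. ?g (2*n-1+2*b) + ?g (2*n-1+2*b+1))"
    by (rule sum_pairs)
  also have "\<dots> = (\<Sum>b<n. (complex_of_real (y (2*n-1+2*b)) + \<i> * complex_of_real (y (2*n+2*b))) * base n p b j)"
  proof (rule sum.cong[OF refl])
    fix b assume "b \<in> {..<n}"
    have e1: "2*n-1+2*b+1 = 2*n+2*b" "2*n-1+2*b+1+1 = 2*n+2*b+1" using n1 by auto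
    have d1: "(2*n+2*b - 2*n) div 2 = b" "(2*n+2*b+1 - 2*n) div 2 = b" by auto
    show "?g (2*n-1+2*b) + ?g (2*n-1+2*b+1) = (complex_of_real (y (2*n-1+2*b)) + \<i> * complex_of_real (y (2*n+2*b))) * base n p b j"
    proof -
      have h1: "cW n (Evec n c p (2*n+2*b)) j = base n p b j"
        using cW_Evec_high[of "2*n+2*b" j] j d1(1) muk_even[of n b] by simp
      have h2: "cW n (Evec n c p (2*n+2*b+1)) j = \<i> * base n p b j"
        using cW_Evec_high[of "2*n+2*b+1" j] j d1(2) muk_odd[of n b] by simp
      show ?thesis unfolding e1 h1 h2 by (simp add: algebra_simps)
    qed
  qed
  finally show ?thesis by simp
qed

lemma sum_split0: "(\<Sum>b<n. f b) = f 0 + (\<Sum>b\<in>{1..<n}. f b)"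
  using n1 by (simp add: lessThan_atLeast0 sum.atLeast_Suc_lessThan)

lemma Yzero:
  assumes N1: "normX2 n p < 1" and h: "\<forall>j<n. (\<Sum>b<n. Y b * base n p b j) = 0"
  shows "\<forall>b<n. Y b = 0"
proof -
  have h0: "Y 0 - (\<Sum>b\<in>{1..<n}. Y b * cX n p b) = 0"
  proof -
    have "(\<Sum>b<n. Y b * base n p b 0) = Y 0 + (\<Sum>b\<in>{1..<n}. Y b * (- cX n p b))"
      unfolding sum_split0 by (simp add: base_def uvec_def kvec_def)
    then show ?thesis using h n1 by (simp add: sum_negf)
  qed
  have ha: "Y a = Y 0 * cnj (cX n p a)" if a: "a \<in> {1..<n}" for a
  proof -
    have "(\<Sum>b\<in>{1..<n}. Y b * base n p b a) = (\<Sum>b\<in>{1..<n}. if b = a then Y a else 0)"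
      by (rule sum.cong) (use a in \<open>auto simp: base_def kvec_def\<close>)
    also have "\<dots> = Y a" using a by simp
    finally have "(\<Sum>b<n. Y b * base n p b a) = Y 0 * (- cnj (cX n p a)) + Y a"
      unfolding sum_split0 using a by (simp add: base_def uvec_def)
    then show ?thesis using h a by (simp add: algebra_simps)
  qed
  have "(\<Sum>b\<in>{1..<n}. Y b * cX n p b) = Y 0 * (\<Sum>b\<in>{1..<n}. cX n p b * cnj (cX n p b))"
    unfolding sum_distrib_left by (rule sum.cong) (auto simp: ha algebra_simps)
  also have "\<dots> = Y 0 * complex_of_real (normX2 n p)" unfolding Xnorm ..
  finally have "Y 0 * (1 - complex_of_real (normX2 n p)) = 0" using h0 by (simp add: algebra_simps)
  moreover have "1 - complex_of_real (normX2 n p) \<noteq> 0"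
  proof
    assume "1 - complex_of_real (normX2 n p) = 0"
    then have "Re (1 - complex_of_real (normX2 n p)) = 0" by simp
    then show False using N1 by simp
  qed
  ultimately have Y0: "Y 0 = 0" by simp
  show ?thesis
  proof (intro allI impI)
    fix b assume "b < n"
    then show "Y b = 0" using Y0 ha[of b] by (cases "b = 0") auto
  qed
qed

lemma EvecX:
  assumes k: "1 \<le> k" "k \<le> 2*n-2" and j: "1 \<le> j"
  shows "Evec n c p j k = (if j = k then 1 else 0)"
proof -
  have k1: "k \<noteq> 2*n-1" using k by auto
  have m: "mkw n \<omega> k = 0" for \<omega> unfolding mkw_def using k by auto
  consider "j \<le> 2*n-2" | "\<not> j \<le> 2*n-2" "j = 2*n-1" | "\<not> j \<le> 2*n-2" "j \<noteq> 2*n-1" "(j - 2*n) div 2 = 0"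
    | "\<not> j \<le> 2*n-2" "j \<noteq> 2*n-1" "(j - 2*n) div 2 \<noteq> 0" by blast
  then show ?thesis
  proof cases
    case 1 then show ?thesis by (simp add: Evec_c1 proj_other[OF k1] ebasis_def)
  next
    case 2 then show ?thesis using k1 by (simp add: Evec_c2 ebasis_def)
  next
    case 3 then show ?thesis using m k by (simp add: Evec_c3 proj_other[OF k1])
  next
    case 4 then show ?thesis using m k by (simp add: Evec_c4 proj_other[OF k1])
  qed
qed

lemma Evec_phi_self: "Evec n c p (2*n-1) (2*n-1) = 1"
proof -
  have "\<not> 2*n-1 \<le> 2*n-2" using n1 by simp
  then show ?thesis by (simp add: Evec_c2 ebasis_def)
qed

lemma P_inj:
  assumes N1: "normX2 n p < 1"
    and hyp: "\<And>i. (\<Sum>t<4*n-1. y t * Evec n c p (t+1) i) = 0"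
  shows "\<forall>t<4*n-1. y t = 0"
proof -
  define V where "V = (\<lambda>i. \<Sum>t<4*n-1. y t * Evec n c p (t+1) i)"
  have V0: "V = (\<lambda>i. 0)" unfolding V_def using hyp by simp
  define Y where "Y = (\<lambda>b. complex_of_real (y (2*n-1+2*b)) + \<i> * complex_of_real (y (2*n+2*b)))"
  have "\<forall>j<n. (\<Sum>b<n. Y b * base n p b j) = 0"
  proof (intro allI impI)
    fix j assume j: "j < n"
    have "cW n V j = 0" unfolding V0 cW_def by (simp add: complex_eq_iff)
    then show "(\<Sum>b<n. Y b * base n p b j) = 0" unfolding V_def cW_V[OF j] Y_def .
  qed
  then have Yz: "\<forall>b<n. Y b = 0" by (rule Yzero[OF N1])
  have yW: "y t = 0" if t: "2*n-1 \<le> t" "t < 4*n-1" for t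
  proof -
    define b where "b = (t - (2*n-1)) div 2"
    have b: "b < n" "t = 2*n-1+2*b \<or> t = 2*n+2*b" using t n1 unfolding b_def by auto
    have "Y b = 0" using Yz b by simp
    then have "Re (Y b) = 0" "Im (Y b) = 0" by simp_all
    then have "y (2*n-1+2*b) = 0" "y (2*n+2*b) = 0" unfolding Y_def by simp_all
    then show ?thesis using b by auto
  qed
  have yX: "y t = 0" if t: "t < 2*n-2" for t
  proof -
    have "V (t+1) = (\<Sum>u<4*n-1. if u = t then y t else 0)"
      unfolding V_def by (rule sum.cong) (use t in \<open>auto simp: EvecX\<close>)
    also have "\<dots> = y t" using t by simp
    finally show ?thesis unfolding V0 by simp
  qed
  have yP: "y (2*n-2) = 0"
  proof -
    have "V (2*n-1) = (\<Sum>u<4*n-1. if u = 2*n-2 then y (2*n-2) else 0)"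
    proof (unfold V_def, rule sum.cong[OF refl])
      fix u assume u: "u \<in> {..<4*n-1}"
      show "y u * Evec n c p (u+1) (2*n-1) = (if u = 2*n-2 then y (2*n-2) else 0)"
      proof (cases "u = 2*n-2")
        case True
        then have "u + 1 = 2*n-1" using n1 by simp
        then show ?thesis using True Evec_phi_self by simp
      next
        case False
        then have "u < 2*n-2 \<or> 2*n-1 \<le> u" by auto
        then have "y u = 0" using yX yW u by auto
        then show ?thesis using False by simp
      qed
    qed
    also have "\<dots> = y (2*n-2)" using n1 by simp
    finally show ?thesis unfolding V0 by simp
  qed
  show ?thesis
  proof (intro allI impI)
    fix t assume t: "t < 4*n-1"
    consider "t < 2*n-2" | "t = 2*n-2" | "2*n-1 \<le> t" by linarith
    then show "y t = 0" by cases (use yX yP yW t in auto)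
  qed
qed

end

lemma mult_entry:
  assumes "A \<in> carrier_mat m m" "B \<in> carrier_mat m m" "i < m" "j < m"
  shows "(A * B) $$ (i,j) = (\<Sum>k<m. A $$ (i,k) * B $$ (k,j))"
proof -
  have "(A * B) $$ (i,j) = row A i \<bullet> col B j" using assms by simp
  also have "\<dots> = (\<Sum>k\<in>{0..<m}. row A i $ k * col B j $ k)" using assms by (simp add: scalar_prod_def)
  also have "\<dots> = (\<Sum>k<m. A $$ (i,k) * B $$ (k,j))" using assms by (auto simp: lessThan_atLeast0 intro!: sum.cong)
  finally show ?thesis .
qed

lemma mult_vec_entry:
  assumes "A \<in> carrier_mat m m" "v \<in> carrier_vec m" "i < m"
  shows "(A *\<^sub>v v) $ i = (\<Sum>k<m. A $$ (i,k) * v $ k)"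
  using assms by (auto simp: scalar_prod_def lessThan_atLeast0 intro!: sum.cong)

lemma inv_exists:
  fixes A :: "'a :: field mat"
  assumes A: "A \<in> carrier_mat m m" and d: "det A \<noteq> 0"
  shows "\<exists>B. B \<in> carrier_mat m m \<and> A * B = 1\<^sub>m m \<and> B * A = 1\<^sub>m m"
proof -
  have "A \<in> Units (ring_mat TYPE('a) m undefined)" by (rule det_non_zero_imp_unit[OF A d])
  then show ?thesis unfolding Units_def ring_mat_def by auto
qed

definition Gm :: "nat \<Rightarrow> real \<Rightarrow> (nat\<Rightarrow>real) \<Rightarrow> real mat" where
  "Gm n c p = mat (4*n-1) (4*n-1) (\<lambda>(i,j). gN n c p (i+1) (j+1))"
definition Fm :: "nat \<Rightarrow> real \<Rightarrow> (nat\<Rightarrow>real) \<Rightarrow> real mat" where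
  "Fm n c p = mat (4*n-1) (4*n-1) (\<lambda>(i,j). sff n c p (i+1) (j+1))"
definition Pm :: "nat \<Rightarrow> real \<Rightarrow> (nat\<Rightarrow>real) \<Rightarrow> real mat" where
  "Pm n c p = mat (4*n-1) (4*n-1) (\<lambda>(r,t). Evec n c p (t+1) (r+1))"
definition Dm :: "nat \<Rightarrow> real \<Rightarrow> (nat\<Rightarrow>real) \<Rightarrow> real mat" where
  "Dm n c p = mat (4*n-1) (4*n-1) (\<lambda>(i,j). if i = j then lamv n c (p 0) (i+1) else 0)"

lemma carriers: "Gm n c p \<in> carrier_mat (4*n-1) (4*n-1)" "Fm n c p \<in> carrier_mat (4*n-1) (4*n-1)"
  "Pm n c p \<in> carrier_mat (4*n-1) (4*n-1)" "Dm n c p \<in> carrier_mat (4*n-1) (4*n-1)"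
  unfolding Gm_def Fm_def Pm_def Dm_def by auto

context
  fixes n :: nat and c :: real and p :: "nat \<Rightarrow> real"
  assumes n1: "n \<ge> 1" and c0: "c \<ge> 0" and r0: "p 0 > 0" and N1: "normX2 n p < 1"
begin

lemma G_ent: "i < 4*n-1 \<Longrightarrow> j < 4*n-1 \<Longrightarrow> Gm n c p $$ (i,j) = bG n c p (ebasis (i+1)) (ebasis (j+1))"
  unfolding Gm_def by (simp add: gN_tan)
lemma F_ent: "i < 4*n-1 \<Longrightarrow> j < 4*n-1 \<Longrightarrow> Fm n c p $$ (i,j) = bF n c p (ebasis (i+1)) (ebasis (j+1))"
  unfolding Fm_def by (simp add: sff_bF[of n c p, OF n1 c0 r0])

lemma Evec_supp': "t < 4*n-1 \<Longrightarrow> i = 0 \<or> i \<ge> 4*n-1+1 \<Longrightarrow> Evec n c p (t+1) i = 0"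
  by (rule Evec_supp[OF n1]) (use n1 in auto)

lemma FP: "Fm n c p * Pm n c p = Gm n c p * Pm n c p * Dm n c p"
proof (rule eq_matI)
  let ?m = "4*n-1"
  fix i t assume "i < dim_row (Gm n c p * Pm n c p * Dm n c p)" "t < dim_col (Gm n c p * Pm n c p * Dm n c p)"
  moreover have "dim_row (Gm n c p * Pm n c p * Dm n c p) = ?m" "dim_col (Gm n c p * Pm n c p * Dm n c p) = ?m"
    by (simp_all add: Gm_def Dm_def)
  ultimately have i: "i < ?m" and t: "t < ?m" by auto
  have GP: "(Gm n c p * Pm n c p) $$ (i,t) = bG n c p (ebasis (i+1)) (Evec n c p (t+1))"
  proof -
    have "(Gm n c p * Pm n c p) $$ (i,t) = (\<Sum>r<?m. Evec n c p (t+1) (r+1) * bG n c p (ebasis (i+1)) (ebasis (r+1)))"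
      unfolding mult_entry[OF carriers(1) carriers(3) i t]
      by (rule sum.cong) (use i t in \<open>auto simp: G_ent Pm_def\<close>)
    also have "\<dots> = bG n c p (ebasis (i+1)) (Evec n c p (t+1))"
      by (rule linR_expand[OF linR_bG2, symmetric]) (rule Evec_supp'[OF t])
    finally show ?thesis .
  qed
  have "(Fm n c p * Pm n c p) $$ (i,t) = (\<Sum>r<?m. Evec n c p (t+1) (r+1) * bF n c p (ebasis (i+1)) (ebasis (r+1)))"
    unfolding mult_entry[OF carriers(2) carriers(3) i t]
    by (rule sum.cong) (use i t in \<open>auto simp: F_ent Pm_def\<close>)
  also have "\<dots> = bF n c p (ebasis (i+1)) (Evec n c p (t+1))"
    by (rule linR_expand[OF linR_bF2, symmetric]) (rule Evec_supp'[OF t])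
  also have "\<dots> = lamv n c (p 0) (t+1) * bG n c p (ebasis (i+1)) (Evec n c p (t+1))"
    by (rule eigen[OF n1 c0 r0 N1]) (use t in auto)
  also have "\<dots> = (Gm n c p * Pm n c p * Dm n c p) $$ (i,t)"
  proof -
    have "(Gm n c p * Pm n c p * Dm n c p) $$ (i,t) = (\<Sum>u<?m. (Gm n c p * Pm n c p) $$ (i,u) * Dm n c p $$ (u,t))"
      by (rule mult_entry[OF _ carriers(4) i t]) (use carriers(1)[of n c p] carriers(3)[of n c p] in auto)
    also have "\<dots> = (\<Sum>u<?m. if u = t then (Gm n c p * Pm n c p) $$ (i,t) * lamv n c (p 0) (t+1) else 0)"
      by (rule sum.cong) (use t in \<open>auto simp: Dm_def\<close>)
    also have "\<dots> = (Gm n c p * Pm n c p) $$ (i,t) * lamv n c (p 0) (t+1)" using t by simp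
    finally show ?thesis unfolding GP by simp
  qed
  finally show "(Fm n c p * Pm n c p) $$ (i,t) = (Gm n c p * Pm n c p * Dm n c p) $$ (i,t)" .
qed (simp_all add: Fm_def Gm_def Pm_def Dm_def)

lemma G_inj:
  assumes y: "y \<in> carrier_vec (4*n-1)" and z: "Gm n c p *\<^sub>v y = 0\<^sub>v (4*n-1)"
  shows "y = 0\<^sub>v (4*n-1)"
proof (rule ccontr)
  let ?m = "4*n-1"
  assume nz: "y \<noteq> 0\<^sub>v ?m"
  define V where "V = (\<lambda>k. \<Sum>r<?m. y $ r * ebasis (r+1) k)"
  have Ve: "V (r+1) = y $ r" if r: "r < ?m" for r
  proof -
    have "V (r+1) = (\<Sum>u<?m. if u = r then y $ r else 0)"
      unfolding V_def by (rule sum.cong) (auto simp: ebasis_def)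
    then show ?thesis using r by simp
  qed
  obtain r where r: "r < ?m" "y $ r \<noteq> 0" using nz y by (metis eq_vecI index_zero_vec(1,2) carrier_vecD)
  have ex: "\<exists>i\<in>{1..<4*n}. V i \<noteq> 0" using r Ve[OF r(1)] by (intro bexI[of _ "r+1"]) auto
  have Gy: "(Gm n c p *\<^sub>v y) $ i = bG n c p (ebasis (i+1)) V" if i: "i < ?m" for i
  proof -
    have "(Gm n c p *\<^sub>v y) $ i = (\<Sum>k<?m. y $ k * bG n c p (ebasis (i+1)) (ebasis (k+1)))"
      unfolding mult_vec_entry[OF carriers(1) y i] by (rule sum.cong) (use i in \<open>auto simp: G_ent\<close>)
    also have "\<dots> = bG n c p (ebasis (i+1)) V"
      unfolding V_def by (rule linR_sum_scaled[OF linR_bG2, symmetric]) simp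
    finally show ?thesis .
  qed
  have "bG n c p V V = (\<Sum>i<?m. y $ i * bG n c p (ebasis (i+1)) V)"
    unfolding V_def[of] by (rule linR_sum_scaled[OF linR_bG1]) simp
  also have "\<dots> = (\<Sum>i<?m. y $ i * (Gm n c p *\<^sub>v y) $ i)" by (rule sum.cong) (auto simp: Gy)
  also have "\<dots> = 0" using z by simp
  finally have "bG n c p V V = 0" .
  moreover have "bG n c p V V > 0" by (rule bG_pos[OF n1 c0 r0 N1 ex])
  ultimately show False by simp
qed

lemma G_det: "det (Gm n c p) \<noteq> 0"
  using det_0_iff_vec_prod_zero[OF carriers(1)] G_inj by blast

lemma P_inj':
  assumes y: "y \<in> carrier_vec (4*n-1)" and z: "Pm n c p *\<^sub>v y = 0\<^sub>v (4*n-1)"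
  shows "y = 0\<^sub>v (4*n-1)"
proof -
  let ?m = "4*n-1"
  have hyp: "(\<Sum>t<?m. y $ t * Evec n c p (t+1) i) = 0" for i
  proof (cases "i = 0 \<or> i \<ge> 4*n")
    case True
    show ?thesis
    proof (intro sum.neutral ballI)
      fix t assume "t \<in> {..<?m}"
      then have "Evec n c p (t+1) i = 0" using True n1 by (intro Evec_supp') auto
      then show "y $ t * Evec n c p (t+1) i = 0" by simp
    qed
  next
    case False
    then obtain r where r: "i = r + 1" "r < ?m" by (metis Suc_eq_plus1 Suc_le_eq add_diff_inverse_nat diff_Suc_1 leI less_one nat_less_le not0_implies_Suc) 
    have "(Pm n c p *\<^sub>v y) $ r = (\<Sum>t<?m. y $ t * Evec n c p (t+1) i)"
      unfolding mult_vec_entry[OF carriers(3) y r(2)] r(1) by (rule sum.cong) (use r in \<open>auto simp: Pm_def\<close>)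
    then show ?thesis using z r by simp
  qed
  have "\<forall>t<?m. y $ t = 0" by (rule P_inj[OF n1 N1, of "\<lambda>t. y $ t"]) (use hyp in simp)
  then show ?thesis using y by (intro eq_vecI) auto
qed

lemma P_det: "det (Pm n c p) \<noteq> 0"
  using det_0_iff_vec_prod_zero[OF carriers(3)] P_inj' by blast

lemma G_sym: "transpose_mat (Gm n c p) = Gm n c p"
  by (rule eq_matI) (auto simp: Gm_def gN_tan bG_sym)
lemma F_sym: "transpose_mat (Fm n c p) = Fm n c p"
  by (rule eq_matI) (auto simp: Fm_def sff_bF[of n c p, OF n1 c0 r0] bF_sym)

end

lemma trace_comm:
  assumes A: "A \<in> carrier_mat m m" and B: "B \<in> carrier_mat m m"
  shows "mat_trace (A * B) = mat_trace (B * A)"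
proof -
  have d1: "dim_row (A * B) = m" "dim_row (B * A) = m" using A B by auto
  have "mat_trace (A * B) = (\<Sum>i<m. (A * B) $$ (i,i))" unfolding mat_trace_def d1 ..
  also have "\<dots> = (\<Sum>i<m. \<Sum>k<m. A $$ (i,k) * B $$ (k,i))"
    by (rule sum.cong[OF refl], rule mult_entry[OF A B]) auto
  also have "\<dots> = (\<Sum>k<m. \<Sum>i<m. B $$ (k,i) * A $$ (i,k))"
    by (subst sum.swap) (simp add: mult.commute)
  also have "\<dots> = (\<Sum>i<m. (B * A) $$ (i,i))"
    by (rule sum.cong[OF refl], rule mult_entry[OF B A, symmetric]) auto
  also have "\<dots> = mat_trace (B * A)" unfolding mat_trace_def d1 ..
  finally show ?thesis .
qed

context
  fixes n :: nat and c :: real and p :: "nat \<Rightarrow> real"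
  assumes n1: "n \<ge> 1" and c0: "c \<ge> 0" and r0: "p 0 > 0" and N1: "normX2 n p < 1"
begin

lemma gN_sym1: "1 \<le> a \<Longrightarrow> 1 \<le> b \<Longrightarrow> gN n c p a b = gN n c p b a"
  by (simp add: gN_tan bG_sym)
lemma sff_sym1: "1 \<le> a \<Longrightarrow> 1 \<le> b \<Longrightarrow> sff n c p a b = sff n c p b a"
  by (simp add: sff_bF[of n c p, OF n1 c0 r0] bF_sym)

lemma shape_iff:
  "is_shape_operator n c p S \<longleftrightarrow> S \<in> carrier_mat (4*n-1) (4*n-1) \<and> Gm n c p * S = Fm n c p"
proof -
  let ?m = "4*n-1"
  have key: "(Gm n c p * S) $$ (i,j) = (\<Sum>r<?m. S $$ (r, j) * gN n c p (r + 1) (i + 1))"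
    if S: "S \<in> carrier_mat ?m ?m" and i: "i < ?m" and j: "j < ?m" for S i j
    unfolding mult_entry[OF carriers(1) S i j]
    by (rule sum.cong) (use i in \<open>auto simp: Gm_def gN_sym1\<close>)
  show ?thesis
  proof
    assume sh: "is_shape_operator n c p S"
    then have S: "S \<in> carrier_mat ?m ?m" unfolding is_shape_operator_def by blast
    have "Gm n c p * S = Fm n c p"
    proof (rule eq_matI)
      fix i j assume "i < dim_row (Fm n c p)" "j < dim_col (Fm n c p)"
      then have i: "i < ?m" and j: "j < ?m" by (auto simp: Fm_def)
      have "(Gm n c p * S) $$ (i,j) = sff n c p (j+1) (i+1)"
        unfolding key[OF S i j] using sh i j unfolding is_shape_operator_def by blast
      also have "\<dots> = Fm n c p $$ (i,j)" using i j by (simp add: Fm_def sff_sym1)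
      finally show "(Gm n c p * S) $$ (i,j) = Fm n c p $$ (i,j)" .
    qed (use S in \<open>auto simp: Gm_def Fm_def\<close>)
    then show "S \<in> carrier_mat ?m ?m \<and> Gm n c p * S = Fm n c p" using S by blast
  next
    assume h: "S \<in> carrier_mat ?m ?m \<and> Gm n c p * S = Fm n c p"
    then have S: "S \<in> carrier_mat ?m ?m" and GS: "Gm n c p * S = Fm n c p" by auto
    show "is_shape_operator n c p S" unfolding is_shape_operator_def
    proof (intro conjI S allI impI)
      fix i j assume i: "i < ?m" and j: "j < ?m"
      have "(\<Sum>r<?m. S $$ (r, i) * gN n c p (r + 1) (j + 1)) = (Gm n c p * S) $$ (j,i)"
        using key[OF S j i] by simp
      also have "\<dots> = sff n c p (i+1) (j+1)" unfolding GS using i j by (simp add: Fm_def sff_sym1)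
      finally show "(\<Sum>r<?m. S $$ (r, i) * gN n c p (r + 1) (j + 1)) = sff n c p (i + 1) (j + 1)" .
    qed
  qed
qed

lemma split4:
  fixes f :: "nat \<Rightarrow> 'a :: comm_monoid_mult"
  shows "prod f {0..<4*n-1} = prod f {0..<2*n-2} * prod f {2*n-2..<2*n-1} * prod f {2*n-1..<2*n+1} * prod f {2*n+1..<4*n-1}"
proof -
  have a: "prod f {0..<2*n-2} * prod f {2*n-2..<2*n-1} = prod f {0..<2*n-1}" by (rule prod.atLeastLessThan_concat) auto
  have b: "prod f {0..<2*n-1} * prod f {2*n-1..<2*n+1} = prod f {0..<2*n+1}" by (rule prod.atLeastLessThan_concat) auto
  have d: "prod f {0..<2*n+1} * prod f {2*n+1..<4*n-1} = prod f {0..<4*n-1}" by (rule prod.atLeastLessThan_concat) (use n1 in auto)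
  show ?thesis by (simp only: a b d)
qed
lemma split4s:
  fixes f :: "nat \<Rightarrow> 'a :: comm_monoid_add"
  shows "sum f {0..<4*n-1} = sum f {0..<2*n-2} + sum f {2*n-2..<2*n-1} + sum f {2*n-1..<2*n+1} + sum f {2*n+1..<4*n-1}"
proof -
  have a: "sum f {0..<2*n-2} + sum f {2*n-2..<2*n-1} = sum f {0..<2*n-1}" by (rule sum.atLeastLessThan_concat) auto
  have b: "sum f {0..<2*n-1} + sum f {2*n-1..<2*n+1} = sum f {0..<2*n+1}" by (rule sum.atLeastLessThan_concat) auto
  have d: "sum f {0..<2*n+1} + sum f {2*n+1..<4*n-1} = sum f {0..<4*n-1}" by (rule sum.atLeastLessThan_concat) (use n1 in auto)
  show ?thesis by (simp only: a b d)
qed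

lemma lam_pieces:
  shows "\<And>i. i \<in> {0..<2*n-2} \<Longrightarrow> lamv n c \<rho> (i+1) = c / (\<rho> + c) * sqrt ((\<rho> + c) / (\<rho> + 2*c))"
    and "\<And>i. i \<in> {2*n-2..<2*n-1} \<Longrightarrow> lamv n c \<rho> (i+1) = (2*\<rho>\<^sup>2 + 5*c*\<rho> + 4*c\<^sup>2) / ((\<rho> + 2*c) * (\<rho> + c)) * sqrt ((\<rho> + c) / (\<rho> + 2*c))"
    and "\<And>i. i \<in> {2*n-1..<2*n+1} \<Longrightarrow> lamv n c \<rho> (i+1) = (\<rho> + 4*c) / (\<rho> + 2*c) * sqrt ((\<rho> + c) / (\<rho> + 2*c))"
    and "\<And>i. i \<in> {2*n+1..<4*n-1} \<Longrightarrow> lamv n c \<rho> (i+1) = sqrt ((\<rho> + c) / (\<rho> + 2*c))"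
proof -
  fix i
  show "i \<in> {0..<2*n-2} \<Longrightarrow> lamv n c \<rho> (i+1) = c / (\<rho> + c) * sqrt ((\<rho> + c) / (\<rho> + 2*c))"
    by (rule lamv_c1) auto
  show "i \<in> {2*n-2..<2*n-1} \<Longrightarrow> lamv n c \<rho> (i+1) = (2*\<rho>\<^sup>2 + 5*c*\<rho> + 4*c\<^sup>2) / ((\<rho> + 2*c) * (\<rho> + c)) * sqrt ((\<rho> + c) / (\<rho> + 2*c))"
    by (rule lamv_c2) (use n1 in auto)
  show "i \<in> {2*n-1..<2*n+1} \<Longrightarrow> lamv n c \<rho> (i+1) = (\<rho> + 4*c) / (\<rho> + 2*c) * sqrt ((\<rho> + c) / (\<rho> + 2*c))"
    by (rule lamv_c3) (use n1 in auto)
  show "i \<in> {2*n+1..<4*n-1} \<Longrightarrow> lamv n c \<rho> (i+1) = sqrt ((\<rho> + c) / (\<rho> + 2*c))"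
    by (rule lamv_c4) (use n1 in auto)
qed

lemma D_charpoly:
  "char_poly (Dm n c p) = (\<Prod>i\<in>{0..<4*n-1}. [:- lamv n c (p 0) (i+1), 1:])"
proof -
  have ut: "upper_triangular (Dm n c p)" unfolding upper_triangular_def Dm_def by auto
  have "char_poly (Dm n c p) = prod_list (map (\<lambda>a. [:- a, 1:]) (diag_mat (Dm n c p)))"
    by (rule char_poly_upper_triangular[OF carriers(4) ut])
  also have "diag_mat (Dm n c p) = map (\<lambda>i. lamv n c (p 0) (i+1)) [0..<4*n-1]"
    unfolding diag_mat_def Dm_def by auto
  also have "prod_list (map (\<lambda>a. [:- a, 1:]) (map (\<lambda>i. lamv n c (p 0) (i+1)) [0..<4*n-1]))
     = (\<Prod>i\<in>{0..<4*n-1}. [:- lamv n c (p 0) (i+1), 1:])"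
  proof -
    have "prod_list (map (\<lambda>a. [:- a, 1:]) (map (\<lambda>i. lamv n c (p 0) (i+1)) [0..<4*n-1]))
       = prod_list (map (\<lambda>i. [:- lamv n c (p 0) (i+1), 1:]) [0..<4*n-1])" by (simp add: comp_def)
    also have "\<dots> = (\<Prod>i\<in>set [0..<4*n-1]. [:- lamv n c (p 0) (i+1), 1:])"
      by (rule prod.distinct_set_conv_list[symmetric]) simp
    finally show ?thesis by simp
  qed
  finally show ?thesis .
qed

lemma D_trace: "mat_trace (Dm n c p) = (\<Sum>i\<in>{0..<4*n-1}. lamv n c (p 0) (i+1))"
  unfolding mat_trace_def Dm_def by (simp add: lessThan_atLeast0)

end

lemma trace_alg:
  fixes \<rho> c s :: real and n :: nat
  assumes "n \<ge> 1" "\<rho> > 0" "c \<ge> 0"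
  shows "real (2*n-2) * (c / (\<rho> + c) * s) + real (2*n-1 - (2*n-2)) * ((2*\<rho>\<^sup>2 + 5*c*\<rho> + 4*c\<^sup>2) / ((\<rho> + 2*c) * (\<rho> + c)) * s)
     + real (2*n+1 - (2*n-1)) * ((\<rho> + 4*c) / (\<rho> + 2*c) * s) + real (4*n-1 - (2*n+1)) * s
   = ((2 * real n + 2) * \<rho>\<^sup>2 + (8 * real n + 7) * c * \<rho> + (8 * real n + 4) * c\<^sup>2) / ((\<rho> + c) * (\<rho> + 2*c)) * s"
proof -
  have e: "real (2*n-2) = 2 * real n - 2" "real (2*n-1 - (2*n-2)) = 1" "real (2*n+1 - (2*n-1)) = 2"
    "real (4*n-1 - (2*n+1)) = 2 * real n - 2" using assms(1) by (auto simp: of_nat_diff)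
  have p: "\<rho> + c > 0" "\<rho> + 2*c > 0" using assms by auto
  show ?thesis unfolding e using p by (simp add: divide_simps) (simp add: algebra_simps power2_eq_square)
qed

theorem proposition3p6:
  fixes n :: nat and c \<rho> :: real and p :: "nat \<Rightarrow> real"
  assumes "n \<ge> 1" and "c \<ge> 0" and "\<rho> > 0"
    and "in_Nbar n p" and "p 0 = \<rho>"
  defines "s \<equiv> sqrt ((\<rho> + c) / (\<rho> + 2*c))"
  defines "\<sigma>1 \<equiv> c / (\<rho> + c) * s"
    and "\<sigma>2 \<equiv> (2*\<rho>\<^sup>2 + 5*c*\<rho> + 4*c\<^sup>2) / ((\<rho> + 2*c) * (\<rho> + c)) * s"
    and "\<sigma>3 \<equiv> (\<rho> + 4*c) / (\<rho> + 2*c) * s"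
    and "\<sigma>4 \<equiv> s"
  shows "(\<exists>!S. is_shape_operator n c p S)
    \<and> (\<forall>S. is_shape_operator n c p S \<longrightarrow>
          char_poly S = [:-\<sigma>1, 1:] ^ (2*n - 2) * [:-\<sigma>2, 1:] * [:-\<sigma>3, 1:] ^ 2
                          * [:-\<sigma>4, 1:] ^ (2*n - 2)
          \<and> mat_trace S = ((2 * real n + 2) * \<rho>\<^sup>2 + (8 * real n + 7) * c * \<rho> + (8 * real n + 4) * c\<^sup>2)
                        / ((\<rho> + c) * (\<rho> + 2*c)) * s)
    \<and> (c > 0 \<longrightarrow> (\<forall>v :: nat \<Rightarrow> real. (\<exists>i\<in>{1..<4*n}. v i \<noteq> 0) \<longrightarrow>
          (\<Sum>i\<in>{1..<4*n}. \<Sum>j\<in>{1..<4*n}. v i * v j * sff n c p i j) > 0))"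
proof -
  note n1 = assms(1) and c0 = assms(2)
  have r0: "p 0 > 0" using assms(3,5) by simp
  have N1: "normX2 n p < 1" using assms(4) by (simp add: in_Nbar_def)
  let ?m = "4*n-1"
  let ?G = "Gm n c p" and ?F = "Fm n c p" and ?P = "Pm n c p" and ?D = "Dm n c p"
  note cG = carriers(1)[of n c p] and cF = carriers(2)[of n c p] and cP = carriers(3)[of n c p]
    and cD = carriers(4)[of n c p]
  obtain Q where Q: "Q \<in> carrier_mat ?m ?m" "?P * Q = 1\<^sub>m ?m" "Q * ?P = 1\<^sub>m ?m"
    using inv_exists[OF cP P_det[OF n1 c0 r0 N1]] by blast
  obtain Gi where Gi: "Gi \<in> carrier_mat ?m ?m" "?G * Gi = 1\<^sub>m ?m" "Gi * ?G = 1\<^sub>m ?m"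
    using inv_exists[OF cG G_det[OF n1 c0 r0 N1]] by blast
  define S0 where "S0 = ?P * ?D * Q"
  have S0c: "S0 \<in> carrier_mat ?m ?m" unfolding S0_def using cP cD Q(1) by auto
  have GS0: "?G * S0 = ?F"
  proof -
    have PDc: "?P * ?D \<in> carrier_mat ?m ?m" using cP cD by simp
    have a1: "?G * ?P * ?D = ?G * (?P * ?D)" by (rule assoc_mult_mat[OF cG cP cD])
    have a2: "?G * (?P * ?D) * Q = ?G * (?P * ?D * Q)" by (rule assoc_mult_mat[OF cG PDc Q(1)])
    have "?G * S0 = (?G * ?P * ?D) * Q" unfolding S0_def a1 a2 ..
    also have "\<dots> = (?F * ?P) * Q" unfolding FP[OF n1 c0 r0 N1] ..
    also have "\<dots> = ?F * (?P * Q)" by (rule assoc_mult_mat[OF cF cP Q(1)])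
    also have "\<dots> = ?F" unfolding Q(2) using cF by simp
    finally show ?thesis .
  qed
  have sh0: "is_shape_operator n c p S0" unfolding shape_iff[OF n1 c0 r0 N1] using S0c GS0 by blast
  have GiF: "S = Gi * ?F" if "S \<in> carrier_mat ?m ?m" "?G * S = ?F" for S
  proof -
    have "S = (Gi * ?G) * S" unfolding Gi(3) using that by simp
    also have "\<dots> = Gi * (?G * S)" by (rule assoc_mult_mat[OF Gi(1) cG that(1)])
    finally show ?thesis unfolding that(2) .
  qed
  have uniq: "S = S0" if "is_shape_operator n c p S" for S
    using that unfolding shape_iff[OF n1 c0 r0 N1] using GiF GiF[OF S0c GS0] by metis
  have part1: "\<exists>!S. is_shape_operator n c p S" using sh0 uniq by blast
  have cpD: "char_poly ?D = [:-\<sigma>1, 1:] ^ (2*n - 2) * [:-\<sigma>2, 1:] * [:-\<sigma>3, 1:] ^ 2 * [:-\<sigma>4, 1:] ^ (2*n - 2)"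
  proof -
    note LP = lam_pieces[OF n1 c0 r0 N1, where \<rho>="p 0"]
    have "char_poly ?D = (\<Prod>i\<in>{0..<4*n-1}. [:- lamv n c (p 0) (i+1), 1:])" by (rule D_charpoly[OF n1 c0 r0 N1])
    also have "\<dots> = (\<Prod>i\<in>{0..<2*n-2}. [:- lamv n c (p 0) (i+1), 1:]) * (\<Prod>i\<in>{2*n-2..<2*n-1}. [:- lamv n c (p 0) (i+1), 1:])
       * (\<Prod>i\<in>{2*n-1..<2*n+1}. [:- lamv n c (p 0) (i+1), 1:]) * (\<Prod>i\<in>{2*n+1..<4*n-1}. [:- lamv n c (p 0) (i+1), 1:])"
      by (rule split4[OF n1 c0 r0 N1])
    also have "(\<Prod>i\<in>{0..<2*n-2}. [:- lamv n c (p 0) (i+1), 1:]) = [:-\<sigma>1, 1:] ^ (2*n - 2)"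
    proof -
      have "(\<Prod>i\<in>{0..<2*n-2}. [:- lamv n c (p 0) (i+1), 1:]) = (\<Prod>i\<in>{0..<2*n-2}. [:-\<sigma>1, 1:])"
      proof (rule prod.cong[OF refl])
        fix i assume i: "i \<in> {0..<2*n-2}"
        have "lamv n c (p 0) (i+1) = \<sigma>1" unfolding \<sigma>1_def s_def assms(5)[symmetric] by (rule LP(1)[OF i])
        then show "[:- lamv n c (p 0) (i+1), 1:] = [:-\<sigma>1, 1:]" by simp
      qed
      also have "\<dots> = [:-\<sigma>1, 1:] ^ (2*n - 2)" by simp
      finally show ?thesis .
    qed
    also have "(\<Prod>i\<in>{2*n-2..<2*n-1}. [:- lamv n c (p 0) (i+1), 1:]) = [:-\<sigma>2, 1:]"
    proof -
      have "(\<Prod>i\<in>{2*n-2..<2*n-1}. [:- lamv n c (p 0) (i+1), 1:]) = (\<Prod>i\<in>{2*n-2..<2*n-1}. [:-\<sigma>2, 1:])"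
      proof (rule prod.cong[OF refl])
        fix i assume i: "i \<in> {2*n-2..<2*n-1}"
        have "lamv n c (p 0) (i+1) = \<sigma>2" unfolding \<sigma>2_def s_def assms(5)[symmetric] by (rule LP(2)[OF i])
        then show "[:- lamv n c (p 0) (i+1), 1:] = [:-\<sigma>2, 1:]" by simp
      qed
      also have "\<dots> = [:-\<sigma>2, 1:]" using n1 by simp
      finally show ?thesis .
    qed
    also have "(\<Prod>i\<in>{2*n-1..<2*n+1}. [:- lamv n c (p 0) (i+1), 1:]) = [:-\<sigma>3, 1:] ^ 2"
    proof -
      have "(\<Prod>i\<in>{2*n-1..<2*n+1}. [:- lamv n c (p 0) (i+1), 1:]) = (\<Prod>i\<in>{2*n-1..<2*n+1}. [:-\<sigma>3, 1:])"
      proof (rule prod.cong[OF refl])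
        fix i assume i: "i \<in> {2*n-1..<2*n+1}"
        have "lamv n c (p 0) (i+1) = \<sigma>3" unfolding \<sigma>3_def s_def assms(5)[symmetric] by (rule LP(3)[OF i])
        then show "[:- lamv n c (p 0) (i+1), 1:] = [:-\<sigma>3, 1:]" by simp
      qed
      also have "\<dots> = [:-\<sigma>3, 1:] ^ 2" using n1 by simp
      finally show ?thesis .
    qed
    also have "(\<Prod>i\<in>{2*n+1..<4*n-1}. [:- lamv n c (p 0) (i+1), 1:]) = [:-\<sigma>4, 1:] ^ (2*n - 2)"
    proof -
      have "(\<Prod>i\<in>{2*n+1..<4*n-1}. [:- lamv n c (p 0) (i+1), 1:]) = (\<Prod>i\<in>{2*n+1..<4*n-1}. [:-\<sigma>4, 1:])"
      proof (rule prod.cong[OF refl])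
        fix i assume i: "i \<in> {2*n+1..<4*n-1}"
        have "lamv n c (p 0) (i+1) = \<sigma>4" unfolding \<sigma>4_def s_def assms(5)[symmetric] by (rule LP(4)[OF i])
        then show "[:- lamv n c (p 0) (i+1), 1:] = [:-\<sigma>4, 1:]" by simp
      qed
      also have "\<dots> = [:-\<sigma>4, 1:] ^ (2*n - 2)" using n1 by simp
      finally show ?thesis .
    qed
    finally show ?thesis .
  qed
  have cpS0: "char_poly S0 = char_poly ?D"
  proof (rule char_poly_similar)
    have "similar_mat_wit S0 ?D ?P Q"
      unfolding similar_mat_wit_def Let_def using S0c cD cP Q unfolding S0_def by auto
    then show "similar_mat S0 ?D" unfolding similar_mat_def by blast
  qed
  have trS0: "mat_trace S0 = ((2 * real n + 2) * \<rho>\<^sup>2 + (8 * real n + 7) * c * \<rho> + (8 * real n + 4) * c\<^sup>2)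
                        / ((\<rho> + c) * (\<rho> + 2*c)) * s"
  proof -
    note LP = lam_pieces[OF n1 c0 r0 N1, where \<rho>="p 0"]
    have "mat_trace S0 = mat_trace (?P * (?D * Q))" unfolding S0_def assoc_mult_mat[OF cP cD Q(1)] ..
    also have "\<dots> = mat_trace ((?D * Q) * ?P)" by (rule trace_comm[OF cP]) (use cD Q(1) in auto)
    also have "\<dots> = mat_trace (?D * (Q * ?P))" unfolding assoc_mult_mat[OF cD Q(1) cP] ..
    also have "\<dots> = mat_trace ?D" unfolding Q(3) using cD by simp
    also have "\<dots> = (\<Sum>i\<in>{0..<4*n-1}. lamv n c (p 0) (i+1))" by (rule D_trace[OF n1 c0 r0 N1])
    also have "\<dots> = (\<Sum>i\<in>{0..<2*n-2}. lamv n c (p 0) (i+1)) + (\<Sum>i\<in>{2*n-2..<2*n-1}. lamv n c (p 0) (i+1))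
       + (\<Sum>i\<in>{2*n-1..<2*n+1}. lamv n c (p 0) (i+1)) + (\<Sum>i\<in>{2*n+1..<4*n-1}. lamv n c (p 0) (i+1))"
      by (rule split4s[OF n1 c0 r0 N1])
    also have "\<dots> = real (2*n-2) * (c / (\<rho> + c) * s) + real (2*n-1 - (2*n-2)) * ((2*\<rho>\<^sup>2 + 5*c*\<rho> + 4*c\<^sup>2) / ((\<rho> + 2*c) * (\<rho> + c)) * s)
     + real (2*n+1 - (2*n-1)) * ((\<rho> + 4*c) / (\<rho> + 2*c) * s) + real (4*n-1 - (2*n+1)) * s"
      using LP unfolding assms(5) s_def by simp
    also have "\<dots> = ((2 * real n + 2) * \<rho>\<^sup>2 + (8 * real n + 7) * c * \<rho> + (8 * real n + 4) * c\<^sup>2)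
                        / ((\<rho> + c) * (\<rho> + 2*c)) * s"
      by (rule trace_alg[OF n1 assms(3) c0])
    finally show ?thesis .
  qed
  have part2: "\<forall>S. is_shape_operator n c p S \<longrightarrow>
          char_poly S = [:-\<sigma>1, 1:] ^ (2*n - 2) * [:-\<sigma>2, 1:] * [:-\<sigma>3, 1:] ^ 2
                          * [:-\<sigma>4, 1:] ^ (2*n - 2)
          \<and> mat_trace S = ((2 * real n + 2) * \<rho>\<^sup>2 + (8 * real n + 7) * c * \<rho> + (8 * real n + 4) * c\<^sup>2)
                        / ((\<rho> + c) * (\<rho> + 2*c)) * s"
    using uniq cpS0 cpD trS0 by auto
  have part3: "c > 0 \<longrightarrow> (\<forall>v :: nat \<Rightarrow> real. (\<exists>i\<in>{1..<4*n}. v i \<noteq> 0) \<longrightarrow>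
          (\<Sum>i\<in>{1..<4*n}. \<Sum>j\<in>{1..<4*n}. v i * v j * sff n c p i j) > 0)"
  proof (intro impI allI)
    fix v :: "nat \<Rightarrow> real"
    assume cp: "c > 0" and nz: "\<exists>i\<in>{1..<4*n}. v i \<noteq> 0"
    define V where "V = (\<lambda>k. \<Sum>i\<in>{1..<4*n}. v i * ebasis i k)"
    have Ve: "V k = v k" if k: "k \<in> {1..<4*n}" for k
    proof -
      have "V k = (\<Sum>i\<in>{1..<4*n}. if i = k then v k else 0)"
        unfolding V_def by (rule sum.cong) (auto simp: ebasis_def)
      then show ?thesis using k by simp
    qed
    have nzV: "\<exists>i\<in>{1..<4*n}. V i \<noteq> 0" using nz Ve by auto
    have "(\<Sum>i\<in>{1..<4*n}. \<Sum>j\<in>{1..<4*n}. v i * v j * sff n c p i j)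
        = (\<Sum>i\<in>{1..<4*n}. v i * (\<Sum>j\<in>{1..<4*n}. v j * bF n c p (ebasis i) (ebasis j)))"
      unfolding sum_distrib_left
      by (intro sum.cong refl) (auto simp: sff_bF[of n c p, OF n1 c0 r0] mult.assoc)
    also have "\<dots> = (\<Sum>i\<in>{1..<4*n}. v i * bF n c p (ebasis i) V)"
      unfolding V_def by (intro sum.cong refl arg_cong2[where f="(*)"] linR_sum_scaled[OF linR_bF2, symmetric]) simp
    also have "\<dots> = bF n c p V V"
      unfolding V_def by (rule linR_sum_scaled[OF linR_bF1, symmetric]) simp
    finally show "(\<Sum>i\<in>{1..<4*n}. \<Sum>j\<in>{1..<4*n}. v i * v j * sff n c p i j) > 0"
      using bF_pos[OF n1 c0 r0 N1 nzV cp] by simp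
  qed
  show ?thesis using part1 part2 part3 by blast
qed

end
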